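(* Consider any sequences evolved by Algorithm 2, let $d_0:=\|x^0-x^*\|>0$, $C:=\lambda_1^{\frac{p-1}{p+1}}\theta^{\frac{2}{p+1}}(1-\sigma^2)^{\frac{p-1}{p+1}}$, and for integers $m\ge0$ put $Q_m:=\Big(1+\frac{2\mu C}{d_0^{2(p-1)/(p+1)}}\,m^{\frac{p-1}{p+1}}\Big)^m$. Then: (a) for all $k\ge0$, $h(y^{k+1})-h(x^* )\le\frac{d_0^2}{2\lambda_1Q_k}$ and $\max\{\|x^*-x^{k+1}\|^2,\|x^*-y^{k+1}\|^2\}\le\frac{d_0^2}{\mu\lambda_1Q_k}$; in particular both are $\mathcal O\big(k^{-k\frac{p-1}{p+1}}\big)$; (b) for all $k\ge1$, $v^{k+1}\in\partial_{\varepsilon_{k+1}}f(y^{k+1})+\partial g(y^{k+1})$, $\|v^{k+1}\|^2\le\Big(1+\sigma\sqrt{1+\mu C d_0^{-2(p-1)/(p+1)}}\Big)^2\frac{6\,d_0^{2(3p-1)/(p+1)}}{\mu C^2\lambda_1Q_{k-1}}$, and $\varepsilon_{k+1}\le\frac{3\sigma^2d_0^{4p/(p+1)}}{\mu C\lambda_1Q_{k-1}}$; in particular both are $\mathcal O\big((k-1)^{-(k-1)\frac{p-1}{p+1}}\big)$.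
   Context: Setting: $\mathcal H$ is a finite-dimensional real inner product space with inner product $\langle\cdot,\cdot\rangle$ and norm $\|\cdot\|$. $f,g:\mathcal H\to(-\infty,\infty]$ are proper, closed, convex functions, $h:=f+g$ has nonempty domain, and $g$ is $\mu$-strongly convex for some $\mu>0$, i.e. $g(tx+(1-t)y)\le tg(x)+(1-t)g(y)-\frac{\mu}{2}t(1-t)\|x-y\|^2$ for all $x,y\in\mathcal H$, $t\in[0,1]$. $x^*$ denotes the unique minimizer of $h$. For $\varepsilon\ge 0$, $\partial_\varepsilon f(y):=\{u\in\mathcal H: f(w)\ge f(y)+\langle u,w-y\rangle-\varepsilon\ \forall w\in\mathcal H\}$, and $\partial g:=\partial_0 g$. Algorithm 2: Choose $x^0,y^0\in\mathcal H$, $\sigma\in[0,1)$, $p\ge2$ and $\theta>0$, and set $A_0=0$. For $k=0,1,2,\dots$: choose $\lambda_{k+1}>0$, set $a_{k+1}=\frac{(1+2\mu A_k)\lambda_{k+1}+\sqrt{(1+2\mu A_k)^2\lambda_{k+1}^2+4(1+\mu A_k)A_k\lambda_{k+1}}}{2}$ and $\tilde x^k=\frac{a_{k+1}-\mu A_k\lambda_{k+1}}{A_k+a_{k+1}}x^k+\frac{A_k+\mu A_k\lambda_{k+1}}{A_k+a_{k+1}}y^k$; compute $(y^{k+1},v^{k+1},\varepsilon_{k+1})\in\mathcal H\times\mathcal H\times[0,\infty)$ such that $v^{k+1}\in\partial_{\varepsilon_{k+1}}f(y^{k+1})+\partial g(y^{k+1})$, $\frac{\|\lambda_{k+1}v^{k+1}+y^{k+1}-\tilde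 x^k\|^2}{1+\lambda_{k+1}\mu}+2\lambda_{k+1}\varepsilon_{k+1}\le\sigma^2\|y^{k+1}-\tilde x^k\|^2$, and $\lambda_{k+1}\|y^{k+1}-\tilde x^k\|^{p-1}\ge\theta$; then set $A_{k+1}=A_k+a_{k+1}$ and $x^{k+1}=\frac{1+\mu A_k}{1+\mu A_{k+1}}x^k+\frac{\mu a_{k+1}}{1+\mu A_{k+1}}y^{k+1}-\frac{a_{k+1}}{1+\mu A_{k+1}}v^{k+1}$. "Sequences evolved by Algorithm 2" means any sequences satisfying all these relations for every $k\ge 0$. The convention $0^0=1$ is used in $Q_0$. *)

theory Defs
  imports "HOL-Analysis.Analysis"
begin

definition proper_fun :: "('a \<Rightarrow> ereal) \<Rightarrow> bool" where
  "proper_fun f \<longleftrightarrow> (\<forall>x. f x \<noteq> -\<infinity>) \<and> (\<exists>x. f x \<noteq> \<infinity>)"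

definition closed_fun :: "('a::topological_space \<Rightarrow> ereal) \<Rightarrow> bool" where
  "closed_fun f \<longleftrightarrow> closed {(x, t::real). f x \<le> ereal t}"

definition convex_fun :: "('a::real_vector \<Rightarrow> ereal) \<Rightarrow> bool" where
  "convex_fun f \<longleftrightarrow> (\<forall>x y. \<forall>t::real. 0 \<le> t \<and> t \<le> 1 \<longrightarrow>
      f (t *\<^sub>R x + (1 - t) *\<^sub>R y) \<le> ereal t * f x + ereal (1 - t) * f y)"

definition strongly_convex_fun :: "real \<Rightarrow> ('a::real_normed_vector \<Rightarrow> ereal) \<Rightarrow> bool" where
  "strongly_convex_fun \<mu> g \<longleftrightarrow> (\<forall>x y. \<forall>t::real. 0 \<le> t \<and> t \<le> 1 \<longrightarrow>
      g (t *\<^sub>R x + (1 - t) *\<^sub>R y) \<le> ereal t * g x + ereal (1 - t) * g y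
        - ereal (\<mu> / 2 * t * (1 - t) * (norm (x - y))\<^sup>2))"

definition dom_fun :: "('a \<Rightarrow> ereal) \<Rightarrow> 'a set" where
  "dom_fun f = {x. f x < \<infinity>}"

definition eps_subdiff :: "real \<Rightarrow> ('a::real_inner \<Rightarrow> ereal) \<Rightarrow> 'a \<Rightarrow> 'a set" where
  "eps_subdiff \<epsilon> f y = {u. \<forall>w. f w \<ge> f y + ereal (inner u (w - y)) - ereal \<epsilon>}"

definition subdiff :: "('a::real_inner \<Rightarrow> ereal) \<Rightarrow> 'a \<Rightarrow> 'a set" where
  "subdiff f y = eps_subdiff 0 f y"

definition set_plus_vec :: "'a::plus set \<Rightarrow> 'a set \<Rightarrow> 'a set" where
  "set_plus_vec A B = {a + b | a b. a \<in> A \<and> b \<in> B}"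

definition algorithm2 ::
  "('a::euclidean_space \<Rightarrow> ereal) \<Rightarrow> ('a \<Rightarrow> ereal) \<Rightarrow> real \<Rightarrow> real \<Rightarrow> real \<Rightarrow> real \<Rightarrow>
   (nat \<Rightarrow> real) \<Rightarrow> (nat \<Rightarrow> real) \<Rightarrow> (nat \<Rightarrow> real) \<Rightarrow> (nat \<Rightarrow> 'a) \<Rightarrow> (nat \<Rightarrow> 'a) \<Rightarrow>
   (nat \<Rightarrow> 'a) \<Rightarrow> (nat \<Rightarrow> 'a) \<Rightarrow> (nat \<Rightarrow> real) \<Rightarrow> bool" where
  "algorithm2 f g \<mu> \<sigma> p \<theta> lam a A x xt y v eps \<longleftrightarrow>
     0 \<le> \<sigma> \<and> \<sigma> < 1 \<and> 2 \<le> p \<and> 0 < \<theta> \<and> A 0 = 0 \<and>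
     (\<forall>k. 0 < lam (Suc k)
        \<and> a (Suc k) = ((1 + 2 * \<mu> * A k) * lam (Suc k)
              + sqrt (((1 + 2 * \<mu> * A k) * lam (Suc k))\<^sup>2
                      + 4 * (1 + \<mu> * A k) * A k * lam (Suc k))) / 2
        \<and> xt k = ((a (Suc k) - \<mu> * A k * lam (Suc k)) / (A k + a (Suc k))) *\<^sub>R x k
              + ((A k + \<mu> * A k * lam (Suc k)) / (A k + a (Suc k))) *\<^sub>R y k
        \<and> 0 \<le> eps (Suc k)
        \<and> v (Suc k) \<in> set_plus_vec (eps_subdiff (eps (Suc k)) f (y (Suc k))) (subdiff g (y (Suc k)))
        \<and> (norm (lam (Suc k) *\<^sub>R v (Suc k) + y (Suc k) - xt k))\<^sup>2 / (1 + lam (Suc k) * \<mu>)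
            + 2 * lam (Suc k) * eps (Suc k) \<le> \<sigma>\<^sup>2 * (norm (y (Suc k) - xt k))\<^sup>2
        \<and> lam (Suc k) * norm (y (Suc k) - xt k) powr (p - 1) \<ge> \<theta>
        \<and> A (Suc k) = A k + a (Suc k)
        \<and> x (Suc k) = ((1 + \<mu> * A k) / (1 + \<mu> * A (Suc k))) *\<^sub>R x k
              + (\<mu> * a (Suc k) / (1 + \<mu> * A (Suc k))) *\<^sub>R y (Suc k)
              - (a (Suc k) / (1 + \<mu> * A (Suc k))) *\<^sub>R v (Suc k))"

end

theory Submission
  imports Defs
begin

lemma limit_lemma:
  fixes a b c :: real
  assumes "c \<ge> 0" "\<And>t. 0 < t \<Longrightarrow> t < 1 \<Longrightarrow> b + c*(1-t) \<le> a"
  shows "b + c \<le> a"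
proof (rule ccontr)
  assume "\<not> b + c \<le> a"
  then have d: "b + c - a > 0" by simp
  with assms(1) have cpos: "c > 0" using assms(2)[of "1/2"] by auto
  define t where "t = min (1/2) ((b+c-a)/(2*c))"
  have "0 < t" "t < 1" using d cpos by (auto simp: t_def)
  then have m1: "b + c*(1-t) \<le> a" using assms(2) by blast
  have m2: "c * t \<le> c * ((b+c-a)/(2*c))" using cpos unfolding t_def
    by (intro mult_left_mono) auto
  have m3: "c * ((b+c-a)/(2*c)) = (b+c-a)/2" using cpos by simp
  have m4: "c*t \<le> (b+c-a)/2" using m2 m3 by linarith
  have m5: "b + c - c*t \<le> a" using m1 by (simp add: algebra_simps)
  have "b + c - a \<le> c*t" using m5 by simp
  then have "b + c - a \<le> (b+c-a)/2" using m4 by (rule order_trans)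
  then show False using d by simp
qed

lemma jensen2:
  fixes e f :: "'a::real_inner"
  assumes "c1 \<ge> 0" "c2 \<ge> 0"
  shows "(norm (c1 *\<^sub>R e + c2 *\<^sub>R f))\<^sup>2 \<le> (c1+c2) * (c1 * (norm e)\<^sup>2 + c2*(norm f)\<^sup>2)"
proof -
  have "(c1+c2) * (c1 * (norm e)\<^sup>2 + c2*(norm f)\<^sup>2) - (norm (c1 *\<^sub>R e + c2 *\<^sub>R f))\<^sup>2
        = c1 * c2 * (norm (e - f))\<^sup>2"
    by (simp only: power2_norm_eq_inner) (simp add: inner_simps inner_commute algebra_simps)
  moreover have "c1 * c2 * (norm (e - f))\<^sup>2 \<ge> 0" using assms by simp
  ultimately show ?thesis by linarith
qed

lemma quadmin:
  fixes b d :: "'a::real_inner"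
  assumes "c > 0"
  shows "c*(norm d)\<^sup>2 + 2*inner b d \<ge> -(norm b)\<^sup>2/c"
proof -
  have "(norm (c *\<^sub>R d + b))\<^sup>2 = c * (c*(norm d)\<^sup>2 + 2*inner b d) + (norm b)\<^sup>2"
    by (simp only: power2_norm_eq_inner) (simp add: inner_simps inner_commute algebra_simps)
  then have "c * (c*(norm d)\<^sup>2 + 2*inner b d) + (norm b)\<^sup>2 \<ge> 0" by (metis zero_le_power2)
  then show ?thesis using assms by (simp add: field_simps)
qed

lemma split_ident:
  fixes e1 e2 :: "'a::real_inner"
  assumes "A + a > 0"
  shows "A*(norm e1)\<^sup>2 + a*(norm e2)\<^sup>2 = (norm (A *\<^sub>R e1 + a *\<^sub>R e2))\<^sup>2/(A+a) + (A*a/(A+a))*(norm (e2 - e1))\<^sup>2"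
proof -
  have "(A+a) * (A*(norm e1)\<^sup>2 + a*(norm e2)\<^sup>2) = (norm (A *\<^sub>R e1 + a *\<^sub>R e2))\<^sup>2 + (A*a)*(norm (e2 - e1))\<^sup>2"
    by (simp only: power2_norm_eq_inner) (simp add: inner_simps inner_commute algebra_simps)
  then have "A*(norm e1)\<^sup>2 + a*(norm e2)\<^sup>2 = ((norm (A *\<^sub>R e1 + a *\<^sub>R e2))\<^sup>2 + (A*a)*(norm (e2 - e1))\<^sup>2)/(A+a)"
    using assms by (simp add: eq_divide_eq mult.commute)
  then show ?thesis by (simp add: add_divide_distrib)
qed



lemma core:
  fixes x y y' v xt x' :: "'a::real_inner"
  assumes A0: "A \<ge> 0" and apos: "a > 0" and lpos: "lm > 0" and mpos: "\<mu> > 0"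
    and hq: "a\<^sup>2 = lm*(a*(1+2*\<mu>*A) + A*(1+\<mu>*A))"
    and hA': "A' = A + a"
    and hxt: "xt = ((a - \<mu>*A*lm)/A') *\<^sub>R x + ((A + \<mu>*A*lm)/A') *\<^sub>R y"
    and hx': "x' = ((1+\<mu>*A)/(1+\<mu>*A')) *\<^sub>R x + (\<mu>*a/(1+\<mu>*A')) *\<^sub>R y' - (a/(1+\<mu>*A')) *\<^sub>R v"
    and hc: "(norm(lm *\<^sub>R v + y' - xt))\<^sup>2/(1+lm*\<mu>) + 2*lm*\<epsilon> \<le> \<sigma>\<^sup>2*(norm(y'-xt))\<^sup>2"
    and ha: "a \<ge> \<mu>*A*lm"
  shows "A*(inner v (y - y') - \<epsilon> + \<mu>/2*(norm(y-y'))\<^sup>2) + a*(inner v (x'-y') - \<epsilon> + \<mu>/2*(norm(x'-y'))\<^sup>2)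
          + (1+\<mu>*A)/2*(norm(x'-x))\<^sup>2 \<ge> A'*(1-\<sigma>\<^sup>2)/(2*lm)*(norm(y'-xt))\<^sup>2"
proof -
  have A'pos: "A' > 0" using A0 apos hA' by simp
  define w where "w = (1/A') *\<^sub>R (A *\<^sub>R y + a *\<^sub>R x')"
  have Aw: "A' *\<^sub>R w = A *\<^sub>R y + a *\<^sub>R x'" using A'pos by (simp add: w_def)
  have e1: "A *\<^sub>R (y - y') + a *\<^sub>R (x' - y') = A' *\<^sub>R (w - y')"
    using Aw hA' by (simp add: algebra_simps)
  have i1: "A*(norm(y-y'))\<^sup>2 + a*(norm(x'-y'))\<^sup>2 = A'*(norm(w-y'))\<^sup>2 + (A*a/A')*(norm(x'-y))\<^sup>2"
  proof -
    have "A*(norm(y-y'))\<^sup>2 + a*(norm(x'-y'))\<^sup>2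
       = (norm (A *\<^sub>R (y-y') + a *\<^sub>R (x'-y')))\<^sup>2/(A+a) + (A*a/(A+a))*(norm ((x'-y') - (y-y')))\<^sup>2"
      using split_ident[of A a "y-y'" "x'-y'"] A'pos hA' by simp
    also have "(norm (A *\<^sub>R (y-y') + a *\<^sub>R (x'-y')))\<^sup>2 = A'^2 * (norm(w-y'))\<^sup>2"
      using e1 A'pos by (simp add: power_mult_distrib)
    finally show ?thesis using hA' A'pos by (simp add: power2_eq_square)
  qed
  have i2: "A*inner v (y - y') + a*inner v (x'-y') = A'*inner v (w - y')"
  proof -
    have "A'*inner v (w - y') = inner v (A' *\<^sub>R (w - y'))" by simp
    also have "\<dots> = inner v (A *\<^sub>R (y - y') + a *\<^sub>R (x' - y'))" using e1 by simp
    finally show ?thesis by (simp add: inner_add_right)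
  qed
  have i3: "A' *\<^sub>R (w - xt) = (a - \<mu>*A*lm) *\<^sub>R (x' - x) + (\<mu>*A*lm) *\<^sub>R (x' - y)"
  proof -
    have "A' *\<^sub>R xt = (a - \<mu>*A*lm) *\<^sub>R x + (A + \<mu>*A*lm) *\<^sub>R y"
      using A'pos by (simp add: hxt scaleR_add_right)
    then show ?thesis using Aw by (simp add: algebra_simps)
  qed
  have i4: "(norm (A' *\<^sub>R (w - xt)))\<^sup>2 \<le> a * ((a - \<mu>*A*lm)*(norm(x'-x))\<^sup>2 + (\<mu>*A*lm)*(norm(x'-y))\<^sup>2)"
    using jensen2[of "a - \<mu>*A*lm" "\<mu>*A*lm" "x'-x" "x'-y"] ha A0 mpos lpos i3 by simp
  have ac1: "a*(a - \<mu>*A*lm) = lm*A'*(1+\<mu>*A)"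
    using hq hA' by (simp add: power2_eq_square algebra_simps)
  have i5: "A'^2*(norm(w-xt))\<^sup>2 \<le> lm*A'*(1+\<mu>*A)*(norm(x'-x))\<^sup>2 + lm*\<mu>*A*a*(norm(x'-y))\<^sup>2"
  proof -
    have "(norm (A' *\<^sub>R (w - xt)))\<^sup>2 = A'^2*(norm(w-xt))\<^sup>2" using A'pos by (simp add: power_mult_distrib)
    moreover have "a * ((a - \<mu>*A*lm)*(norm(x'-x))\<^sup>2 + (\<mu>*A*lm)*(norm(x'-y))\<^sup>2)
        = lm*A'*(1+\<mu>*A)*(norm(x'-x))\<^sup>2 + lm*\<mu>*A*a*(norm(x'-y))\<^sup>2"
    proof -
      have "a * ((a - \<mu>*A*lm)*(norm(x'-x))\<^sup>2 + (\<mu>*A*lm)*(norm(x'-y))\<^sup>2)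
        = (a*(a - \<mu>*A*lm))*(norm(x'-x))\<^sup>2 + lm*\<mu>*A*a*(norm(x'-y))\<^sup>2"
        by (simp add: algebra_simps)
      then show ?thesis unfolding ac1 .
    qed
    ultimately show ?thesis using i4 by simp
  qed
  have i6: "(1+\<mu>*A)/2*(norm(x'-x))\<^sup>2 + \<mu>/2*(A*a/A')*(norm(x'-y))\<^sup>2 \<ge> A'/(2*lm)*(norm(w-xt))\<^sup>2"
  proof -
    have "A'/(2*lm)*(norm(w-xt))\<^sup>2 = (A'^2*(norm(w-xt))\<^sup>2)/(2*lm*A')"
      using A'pos lpos by (simp add: power2_eq_square field_simps)
    also have "\<dots> \<le> (lm*A'*(1+\<mu>*A)*(norm(x'-x))\<^sup>2 + lm*\<mu>*A*a*(norm(x'-y))\<^sup>2)/(2*lm*A')"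
      using i5 A'pos lpos by (intro divide_right_mono) auto
    also have "\<dots> = (1+\<mu>*A)/2*(norm(x'-x))\<^sup>2 + \<mu>/2*(A*a/A')*(norm(x'-y))\<^sup>2"
      using A'pos lpos by (simp add: field_simps)
    finally show ?thesis .
  qed
  define d where "d = w - y'"
  define r where "r = y' - xt"
  have dr: "d + r = w - xt" by (simp add: d_def r_def)
  have i7: "2*lm*inner v d + lm*\<mu>*(norm d)\<^sup>2 + (norm (d + r))\<^sup>2 \<ge> 2*lm*\<epsilon> + (1-\<sigma>\<^sup>2)*(norm r)\<^sup>2"
  proof -
    have id: "2*lm*inner v d + lm*\<mu>*(norm d)\<^sup>2 + (norm (d + r))\<^sup>2
       = (1+lm*\<mu>)*(norm d)\<^sup>2 + 2*inner (lm *\<^sub>R v + r) d + (norm r)\<^sup>2"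
      by (simp only: power2_norm_eq_inner) (simp add: inner_simps inner_commute algebra_simps)
    have q: "(1+lm*\<mu>)*(norm d)\<^sup>2 + 2*inner (lm *\<^sub>R v + r) d \<ge> -(norm (lm *\<^sub>R v + r))\<^sup>2/(1+lm*\<mu>)"
      using quadmin[of "1+lm*\<mu>" "lm *\<^sub>R v + r" d] lpos mpos by (simp add: add_pos_pos)
    have "lm *\<^sub>R v + y' - xt = lm *\<^sub>R v + r" by (simp add: r_def)
    then have "(norm (lm *\<^sub>R v + r))\<^sup>2/(1+lm*\<mu>) \<le> \<sigma>\<^sup>2*(norm r)\<^sup>2 - 2*lm*\<epsilon>"
      using hc unfolding r_def by (simp add: add_diff_eq)
    then show ?thesis using id q by (simp add: algebra_simps)
  qed
  have "A*(inner v (y - y') - \<epsilon> + \<mu>/2*(norm(y-y'))\<^sup>2) + a*(inner v (x'-y') - \<epsilon> + \<mu>/2*(norm(x'-y'))\<^sup>2)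
          + (1+\<mu>*A)/2*(norm(x'-x))\<^sup>2
       = (A*inner v (y - y') + a*inner v (x'-y')) - A'*\<epsilon> + \<mu>/2*(A*(norm(y-y'))\<^sup>2 + a*(norm(x'-y'))\<^sup>2)
          + (1+\<mu>*A)/2*(norm(x'-x))\<^sup>2"
    using hA' by (simp add: algebra_simps)
  also have "\<dots> = A'*inner v d - A'*\<epsilon> + \<mu>/2*A'*(norm d)\<^sup>2
          + ((1+\<mu>*A)/2*(norm(x'-x))\<^sup>2 + \<mu>/2*(A*a/A')*(norm(x'-y))\<^sup>2)"
    using i1 i2 by (simp add: d_def algebra_simps)
  also have "\<dots> \<ge> A'*inner v d - A'*\<epsilon> + \<mu>/2*A'*(norm d)\<^sup>2 + A'/(2*lm)*(norm(d + r))\<^sup>2"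
    using i6 dr by simp
  finally have f1: "A'*inner v d - A'*\<epsilon> + \<mu>/2*A'*(norm d)\<^sup>2 + A'/(2*lm)*(norm(d + r))\<^sup>2 \<le> 
     A*(inner v (y - y') - \<epsilon> + \<mu>/2*(norm(y-y'))\<^sup>2) + a*(inner v (x'-y') - \<epsilon> + \<mu>/2*(norm(x'-y'))\<^sup>2)
          + (1+\<mu>*A)/2*(norm(x'-x))\<^sup>2" .
  have "A'*inner v d - A'*\<epsilon> + \<mu>/2*A'*(norm d)\<^sup>2 + A'/(2*lm)*(norm(d + r))\<^sup>2
      = A'/(2*lm) * (2*lm*inner v d + lm*\<mu>*(norm d)\<^sup>2 + (norm (d + r))\<^sup>2) - A'*\<epsilon>"
    using lpos by (simp add: field_simps)
  also have "\<dots> \<ge> A'/(2*lm) * (2*lm*\<epsilon> + (1-\<sigma>\<^sup>2)*(norm r)\<^sup>2) - A'*\<epsilon>"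
    using i7 A'pos lpos by (intro diff_right_mono mult_left_mono) auto
  also have "A'/(2*lm) * (2*lm*\<epsilon> + (1-\<sigma>\<^sup>2)*(norm r)\<^sup>2) - A'*\<epsilon> = A'*(1-\<sigma>\<^sup>2)/(2*lm)*(norm(y'-xt))\<^sup>2"
    using lpos by (simp add: field_simps r_def)
  finally show ?thesis using f1 by linarith
qed



lemma quad_ident:
  fixes p q m z vv :: "'a::real_inner"
  assumes "(\<alpha>+\<beta>) *\<^sub>R m = \<alpha> *\<^sub>R p + \<beta> *\<^sub>R q - vv"
  shows "\<alpha>/2*(norm(z-p))\<^sup>2 + \<beta>/2*(norm(z-q))\<^sup>2 + inner vv z
       = \<alpha>/2*(norm(m-p))\<^sup>2 + \<beta>/2*(norm(m-q))\<^sup>2 + inner vv m + (\<alpha>+\<beta>)/2*(norm(z-m))\<^sup>2"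
proof -
  have vv: "vv = \<alpha> *\<^sub>R p + \<beta> *\<^sub>R q - (\<alpha>+\<beta>) *\<^sub>R m" using assms by (simp add: algebra_simps)
  show ?thesis unfolding vv
    by (simp only: power2_norm_eq_inner) (simp add: inner_simps inner_commute algebra_simps, simp add: field_simps)
qed

lemma superadd:
  fixes x :: "nat \<Rightarrow> real"
  assumes S: "finite S" "S \<noteq> {}" and x: "\<And>i. i \<in> S \<Longrightarrow> x i \<ge> 0"
  shows "(1 + (\<Prod>i\<in>S. x i) powr (1/card S)) ^ card S \<le> (\<Prod>i\<in>S. (1 + x i))"
proof -
  define n where "n = card S"
  have npos: "n > 0" using S by (simp add: n_def card_gt_0_iff)
  define P where "P = (\<Prod>i\<in>S. (1 + x i))"
  define X where "X = (\<Prod>i\<in>S. x i)"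
  have Ppos: "P > 0" unfolding P_def using x by (intro prod_pos) (auto intro: add_pos_nonneg)
  have X0: "X \<ge> 0" unfolding X_def using x by (intro prod_nonneg) auto
  have g1: "(\<Prod>i\<in>S. 1/(1 + x i)) powr (1/n) \<le> (\<Sum>i\<in>S. (1/(1 + x i))/n)"
    using arith_geom_mean[OF S, of "\<lambda>i. 1/(1+x i)"] x unfolding n_def
    by (simp add: add_nonneg_nonneg)
  have g2: "(\<Prod>i\<in>S. x i/(1 + x i)) powr (1/n) \<le> (\<Sum>i\<in>S. (x i/(1 + x i))/n)"
    using arith_geom_mean[OF S, of "\<lambda>i. x i/(1+x i)"] x unfolding n_def
    by (simp add: add_nonneg_nonneg)
  have s1: "(\<Sum>i\<in>S. (1/(1 + x i))/n) + (\<Sum>i\<in>S. (x i/(1 + x i))/n) = 1"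
  proof -
    have "(\<Sum>i\<in>S. (1/(1 + x i))/n) + (\<Sum>i\<in>S. (x i/(1 + x i))/n) = (\<Sum>i\<in>S. 1/n)"
      unfolding sum.distrib[symmetric]
    proof (rule sum.cong)
      fix i assume "i \<in> S"
      then have "1 + x i > 0" using x by (simp add: add_pos_nonneg)
      then have h: "1/(1+x i) + x i/(1+x i) = 1" by (simp add: add_divide_distrib[symmetric])
      show "1 / (1 + x i) / real n + x i / (1 + x i) / real n = 1 / real n"
        by (metis add_divide_distrib h)
    qed simp
    also have "\<dots> = 1" using npos by (simp add: n_def)
    finally show ?thesis .
  qed
  have p1: "(\<Prod>i\<in>S. 1/(1 + x i)) = 1/P" unfolding P_def by (simp add: prod_dividef)
  have p2: "(\<Prod>i\<in>S. x i/(1 + x i)) = X/P" unfolding P_def X_def by (simp add: prod_dividef)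
  have "(1/P) powr (1/n) + (X/P) powr (1/n) \<le> 1" using g1 g2 s1 p1 p2 by simp
  moreover have "(1/P) powr (1/n) = 1 / P powr (1/n)" using Ppos by (simp add: powr_divide)
  moreover have "(X/P) powr (1/n) = X powr (1/n) / P powr (1/n)" using Ppos X0 by (simp add: powr_divide)
  ultimately have "(1 + X powr (1/n)) / P powr (1/n) \<le> 1" by (simp add: add_divide_distrib)
  then have le: "1 + X powr (1/n) \<le> P powr (1/n)" using Ppos by simp
  have "(1 + X powr (1/n)) ^ n \<le> (P powr (1/n)) ^ n"
    by (rule power_mono[OF le]) (simp add: add_nonneg_nonneg)
  also have "(P powr (1/n)) ^ n = P"
    using Ppos npos by (simp add: powr_realpow[symmetric] powr_powr)
  finally show ?thesis unfolding n_def X_def P_def .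
qed



lemma fin_from_epssub:
  assumes "proper_fun f" "u \<in> eps_subdiff e f y"
  shows "f y = ereal (real_of_ereal (f y))"
proof -
  obtain z where z: "f z \<noteq> \<infinity>" using assms(1) unfolding proper_fun_def by auto
  have ge: "f z \<ge> f y + ereal (inner u (z - y)) - ereal e" using assms(2) unfolding eps_subdiff_def by auto
  have "f y \<noteq> \<infinity>"
  proof
    assume "f y = \<infinity>"
    then have "f z = \<infinity>" using ge by simp
    then show False using z by simp
  qed
  moreover have "f y \<noteq> -\<infinity>" using assms(1) unfolding proper_fun_def by auto
  ultimately show ?thesis by (cases "f y") auto
qed

lemma strong_subgrad:
  fixes g :: "'a::real_inner \<Rightarrow> ereal"
  assumes pg: "proper_fun g" and sc: "strongly_convex_fun \<mu> g" and mu: "\<mu> \<ge> 0"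
    and w: "w \<in> subdiff g y" and gy: "g y = ereal gy"
  shows "g z \<ge> ereal (gy + inner w (z - y) + \<mu>/2 * (norm (z - y))\<^sup>2)"
proof (cases "g z = \<infinity>")
  case True then show ?thesis by simp
next
  case False
  then obtain gz where gz: "g z = ereal gz" using pg unfolding proper_fun_def by (cases "g z") auto
  have "gy + inner w (z - y) + \<mu>/2 * (norm (z - y))\<^sup>2 \<le> gz"
  proof (rule limit_lemma)
    show "0 \<le> \<mu>/2 * (norm (z - y))\<^sup>2" using mu by simp
  next
    fix t :: real assume t: "0 < t" "t < 1"
    define m where "m = t *\<^sub>R z + (1 - t) *\<^sub>R y"
    have my: "m - y = t *\<^sub>R (z - y)" by (simp add: m_def algebra_simps)
    have lo: "g m \<ge> g y + ereal (inner w (m - y)) - ereal 0" using w unfolding subdiff_def eps_subdiff_def by blast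
    have up: "g m \<le> ereal t * g z + ereal (1 - t) * g y - ereal (\<mu> / 2 * t * (1 - t) * (norm (z - y))\<^sup>2)"
      using sc t unfolding strongly_convex_fun_def m_def by auto
    have "ereal (gy + t * inner w (z - y)) \<le> ereal (t * gz + (1-t) * gy - \<mu> / 2 * t * (1 - t) * (norm (z - y))\<^sup>2)"
      using lo up my gy gz by (metis (no_types, lifting) order_trans ereal_minus(1) plus_ereal.simps(1) times_ereal.simps(1) inner_scaleR_right diff_0_right)
    then have r: "gy + t * inner w (z - y) \<le> t * gz + (1-t) * gy - \<mu> / 2 * t * (1 - t) * (norm (z - y))\<^sup>2" by simp
    have "t * (gy + inner w (z - y) + \<mu>/2 * (norm (z - y))\<^sup>2 * (1 - t)) \<le> t * gz"
      using r by (simp add: algebra_simps)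
    then show "gy + inner w (z - y) + \<mu>/2 * (norm (z - y))\<^sup>2 * (1 - t) \<le> gz" using t by simp
  qed
  then show ?thesis using gz by simp
qed

lemma h_strong:
  fixes f g :: "'a::real_inner \<Rightarrow> ereal"
  assumes pf: "proper_fun f" and pg: "proper_fun g" and cf: "convex_fun f" and sc: "strongly_convex_fun \<mu> g" and mu: "\<mu> \<ge> 0"
    and fy: "f y = ereal fy" and gy: "g y = ereal gy" and fx: "f xs = ereal fx" and gx: "g xs = ereal gx"
    and mn: "\<forall>z. f xs + g xs \<le> f z + g z"
  shows "\<mu>/2 * (norm (y - xs))\<^sup>2 \<le> (fy + gy) - (fx + gx)"
proof -
  have "(fx + gx) + \<mu>/2 * (norm (y - xs))\<^sup>2 \<le> fy + gy"
  proof (rule limit_lemma)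
    show "0 \<le> \<mu>/2 * (norm (y - xs))\<^sup>2" using mu by simp
  next
    fix t :: real assume t: "0 < t" "t < 1"
    define m where "m = t *\<^sub>R y + (1 - t) *\<^sub>R xs"
    have uf: "f m \<le> ereal t * f y + ereal (1 - t) * f xs" using cf t unfolding convex_fun_def m_def by auto
    have ug: "g m \<le> ereal t * g y + ereal (1 - t) * g xs - ereal (\<mu> / 2 * t * (1 - t) * (norm (y - xs))\<^sup>2)"
      using sc t unfolding strongly_convex_fun_def m_def by auto
    have fm: "f m \<noteq> -\<infinity>" "g m \<noteq> -\<infinity>" using pf pg unfolding proper_fun_def by auto
    obtain fmr where fmr: "f m = ereal fmr" using uf fm fy fx by (cases "f m") auto
    obtain gmr where gmr: "g m = ereal gmr" using ug fm gy gx by (cases "g m") auto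
    have a1: "fmr \<le> t * fy + (1-t) * fx" using uf fmr fy fx by simp
    have a2: "gmr \<le> t * gy + (1-t) * gx - \<mu> / 2 * t * (1 - t) * (norm (y - xs))\<^sup>2" using ug gmr gy gx by simp
    have a3: "fx + gx \<le> fmr + gmr" using mn[rule_format, of m] fmr gmr fx gx by simp
    have "t * (fx + gx + \<mu>/2 * (norm (y - xs))\<^sup>2 * (1 - t)) \<le> t * (fy + gy)"
      using a1 a2 a3 by (simp add: algebra_simps)
    then show "fx + gx + \<mu>/2 * (norm (y - xs))\<^sup>2 * (1 - t) \<le> fy + gy" using t by simp
  qed
  then show ?thesis by simp
qed



locale alg2 =
  fixes f g :: "'a::euclidean_space \<Rightarrow> ereal" and \<mu> \<sigma> p \<theta> :: real
    and lam a A eps :: "nat \<Rightarrow> real" and x xt y v :: "nat \<Rightarrow> 'a" and xs :: 'a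
  assumes pf: "proper_fun f" and pg: "proper_fun g" and cf: "convex_fun f"
    and mu: "0 < \<mu>" and sc: "strongly_convex_fun \<mu> g"
    and mn: "\<forall>z. f xs + g xs \<le> f z + g z"
    and alg: "algorithm2 f g \<mu> \<sigma> p \<theta> lam a A x xt y v eps"
begin

lemma basic: "0 \<le> \<sigma>" "\<sigma> < 1" "2 \<le> p" "0 < \<theta>" "A 0 = 0"
  using alg unfolding algorithm2_def by auto

lemma step_facts:
  "0 < lam (Suc k)"
  "a (Suc k) = ((1 + 2 * \<mu> * A k) * lam (Suc k)
              + sqrt (((1 + 2 * \<mu> * A k) * lam (Suc k))\<^sup>2
                      + 4 * (1 + \<mu> * A k) * A k * lam (Suc k))) / 2"
  "xt k = ((a (Suc k) - \<mu> * A k * lam (Suc k)) / (A k + a (Suc k))) *\<^sub>R x k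
              + ((A k + \<mu> * A k * lam (Suc k)) / (A k + a (Suc k))) *\<^sub>R y k"
  "0 \<le> eps (Suc k)"
  "v (Suc k) \<in> set_plus_vec (eps_subdiff (eps (Suc k)) f (y (Suc k))) (subdiff g (y (Suc k)))"
  "(norm (lam (Suc k) *\<^sub>R v (Suc k) + y (Suc k) - xt k))\<^sup>2 / (1 + lam (Suc k) * \<mu>)
            + 2 * lam (Suc k) * eps (Suc k) \<le> \<sigma>\<^sup>2 * (norm (y (Suc k) - xt k))\<^sup>2"
  "lam (Suc k) * norm (y (Suc k) - xt k) powr (p - 1) \<ge> \<theta>"
  "A (Suc k) = A k + a (Suc k)"
  "x (Suc k) = ((1 + \<mu> * A k) / (1 + \<mu> * A (Suc k))) *\<^sub>R x k
              + (\<mu> * a (Suc k) / (1 + \<mu> * A (Suc k))) *\<^sub>R y (Suc k)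
              - (a (Suc k) / (1 + \<mu> * A (Suc k))) *\<^sub>R v (Suc k)"
  using alg unfolding algorithm2_def by blast+

lemma a_props: "A k \<ge> 0 \<and> a (Suc k) \<ge> (1 + 2*\<mu>*A k) * lam (Suc k)
   \<and> (a (Suc k))\<^sup>2 = lam (Suc k) * (a (Suc k)*(1+2*\<mu>*A k) + A k*(1+\<mu>*A k))"
proof (induction k)
  case 0
  have "A 0 = 0" using basic by simp
  moreover have "a 1 = lam 1" using step_facts(2)[of 0] step_facts(1)[of 0] basic(5) by simp
  ultimately show ?case by (simp add: power2_eq_square)
next
  case (Suc k)
  have A: "A (Suc k) \<ge> 0"
  proof -
    have "a (Suc k) \<ge> 0"
      using Suc.IH step_facts(1)[of k] mu by (smt (verit) mult_nonneg_nonneg)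
    then show ?thesis using Suc.IH step_facts(8)[of k] by simp
  qed
  define B where "B = (1 + 2*\<mu>*A (Suc k)) * lam (Suc (Suc k))"
  define R where "R = 4 * (1 + \<mu> * A (Suc k)) * A (Suc k) * lam (Suc (Suc k))"
  have R0: "R \<ge> 0" unfolding R_def using A mu step_facts(1)[of "Suc k"] by simp
  have B0: "B \<ge> 0" unfolding B_def using A mu step_facts(1)[of "Suc k"] by simp
  have ad: "a (Suc (Suc k)) = (B + sqrt (B\<^sup>2 + R))/2" unfolding B_def R_def using step_facts(2)[of "Suc k"] by simp
  have sq: "sqrt (B\<^sup>2 + R) \<ge> B" using R0 B0 by (simp add: real_le_rsqrt)
  have s2: "(sqrt (B\<^sup>2 + R))\<^sup>2 = B\<^sup>2 + R" using R0 by simp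
  have g: "a (Suc (Suc k)) \<ge> B" using ad sq by simp
  have "(a (Suc (Suc k)))\<^sup>2 = B * a (Suc (Suc k)) + R/4"
    unfolding ad using s2 by (simp add: power2_eq_square field_simps)
  then show ?case using A g unfolding B_def R_def by (simp add: algebra_simps)
qed

lemma A_nonneg: "A k \<ge> 0" using a_props by blast
lemma a_ge: "a (Suc k) \<ge> (1 + 2*\<mu>*A k) * lam (Suc k)" using a_props by blast
lemma a_sq: "(a (Suc k))\<^sup>2 = lam (Suc k) * (a (Suc k)*(1+2*\<mu>*A k) + A k*(1+\<mu>*A k))" using a_props by blast
lemma a_pos: "a (Suc k) > 0"
proof -
  have "(1 + 2*\<mu>*A k) * lam (Suc k) > 0" using A_nonneg[of k] mu step_facts(1)[of k]
    by (simp add: add_pos_nonneg)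
  then show ?thesis using a_ge[of k] by linarith
qed
lemma A_sum: "A k = (\<Sum>j<k. a (Suc j))"
  by (induction k) (simp_all add: basic(5) step_facts(8))
lemma A1: "A 1 = lam 1"
  using step_facts(2)[of 0] step_facts(1)[of 0] basic(5) step_facts(8)[of 0] by simp

end


context alg2 begin

definition H :: "nat \<Rightarrow> real" where
  "H j = real_of_ereal (f (y j)) + real_of_ereal (g (y j))"

definition gam :: "nat \<Rightarrow> 'a \<Rightarrow> real" where
  "gam k z = H (Suc k) + inner (v (Suc k)) (z - y (Suc k)) - eps (Suc k) + \<mu>/2 * (norm (z - y (Suc k)))\<^sup>2"

definition psi :: "nat \<Rightarrow> 'a \<Rightarrow> real" where
  "psi k z = 1/2 * (norm (z - x 0))\<^sup>2 + (\<Sum>j<k. a (Suc j) * gam j z)"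

definition S :: "nat \<Rightarrow> real" where
  "S k = (\<Sum>j<k. A (Suc j) * (1 - \<sigma>\<^sup>2) / (2 * lam (Suc j)) * (norm (y (Suc j) - xt j))\<^sup>2)"

lemma lower_and_fin:
  "f (y (Suc k)) + g (y (Suc k)) = ereal (H (Suc k))
   \<and> (\<forall>z. f z + g z \<ge> ereal (gam k z))"
proof -
  obtain u w where uw: "v (Suc k) = u + w" "u \<in> eps_subdiff (eps (Suc k)) f (y (Suc k))"
      "w \<in> subdiff g (y (Suc k))"
    using step_facts(5)[of k] unfolding set_plus_vec_def by blast
  define fy where "fy = real_of_ereal (f (y (Suc k)))"
  define gy where "gy = real_of_ereal (g (y (Suc k)))"
  have fy: "f (y (Suc k)) = ereal fy" using fin_from_epssub[OF pf uw(2)] fy_def by simp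
  have gy: "g (y (Suc k)) = ereal gy" using fin_from_epssub[OF pg uw(3)[unfolded subdiff_def]] gy_def by simp
  have Hk: "H (Suc k) = fy + gy" unfolding H_def fy_def gy_def by simp
  have "\<forall>z. f z + g z \<ge> ereal (gam k z)"
  proof
    fix z
    have lf: "f z \<ge> ereal (fy + inner u (z - y (Suc k)) - eps (Suc k))"
      using uw(2) fy unfolding eps_subdiff_def by auto
    have lg: "g z \<ge> ereal (gy + inner w (z - y (Suc k)) + \<mu>/2 * (norm (z - y (Suc k)))\<^sup>2)"
      using strong_subgrad[OF pg sc _ uw(3) gy] mu by simp
    have "ereal (fy + inner u (z - y (Suc k)) - eps (Suc k)) + ereal (gy + inner w (z - y (Suc k)) + \<mu>/2 * (norm (z - y (Suc k)))\<^sup>2) \<le> f z + g z"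
      using lf lg by (rule add_mono)
    moreover have "(fy + inner u (z - y (Suc k)) - eps (Suc k)) + (gy + inner w (z - y (Suc k)) + \<mu>/2 * (norm (z - y (Suc k)))\<^sup>2) = gam k z"
      unfolding gam_def Hk uw(1) by (simp add: inner_add_left algebra_simps)
    ultimately show "f z + g z \<ge> ereal (gam k z)" by simp
  qed
  then show ?thesis using fy gy Hk by simp
qed

lemma hy: "f (y (Suc k)) + g (y (Suc k)) = ereal (H (Suc k))" using lower_and_fin by blast
lemma lower: "f z + g z \<ge> ereal (gam k z)" using lower_and_fin by blast

definition hs :: real where "hs = real_of_ereal (f xs) + real_of_ereal (g xs)"

lemma xs_fin: "f xs = ereal (real_of_ereal (f xs))" "g xs = ereal (real_of_ereal (g xs))"
  "f xs + g xs = ereal hs"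
proof -
  have le: "f xs + g xs \<le> ereal (H 1)" using mn hy[of 0] by (metis One_nat_def)
  have n1: "f xs \<noteq> -\<infinity>" "g xs \<noteq> -\<infinity>" using pf pg unfolding proper_fun_def by auto
  have "f xs \<noteq> \<infinity>" using le n1 by auto
  moreover have "g xs \<noteq> \<infinity>" using le n1 by auto
  ultimately show "f xs = ereal (real_of_ereal (f xs))" "g xs = ereal (real_of_ereal (g xs))"
    using n1 by (cases "f xs"; simp; cases "g xs"; simp)+
  then show "f xs + g xs = ereal hs" unfolding hs_def by (metis plus_ereal.simps(1))
qed

lemma H_ge: "H (Suc k) \<ge> hs"
  using mn hy[of k] xs_fin(3) by (metis ereal_less_eq(3))

lemma gam_le_hs: "gam k xs \<le> hs" using lower[of k xs] xs_fin(3) by simp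

lemma gam_le_H: "gam k (y (Suc j)) \<le> H (Suc j)" using lower[of k "y (Suc j)"] hy[of j] by simp

lemma psi_quad: "psi k z = psi k (x k) + (1 + \<mu> * A k)/2 * (norm (z - x k))\<^sup>2"
proof (induction k arbitrary: z)
  case 0
  then show ?case by (simp add: psi_def basic(5))
next
  case (Suc k)
  define al where "al = 1 + \<mu> * A k"
  define be where "be = \<mu> * a (Suc k)"
  define K where "K = psi k (x k) + a (Suc k) * (H (Suc k) - inner (v (Suc k)) (y (Suc k)) - eps (Suc k))"
  define E where "E = (\<lambda>z. al/2*(norm(z - x k))\<^sup>2 + be/2*(norm(z - y (Suc k)))\<^sup>2 + inner (a (Suc k) *\<^sub>R v (Suc k)) z)"
  have F: "psi (Suc k) z = K + E z" for z
  proof -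
    have "psi (Suc k) z = psi k z + a (Suc k) * gam k z" by (simp add: psi_def)
    also have "\<dots> = K + E z" unfolding Suc.IH[of z] K_def E_def al_def be_def gam_def
      by (simp add: inner_diff_right algebra_simps)
    finally show ?thesis .
  qed
  have Apos: "1 + \<mu> * A (Suc k) > 0" using A_nonneg[of "Suc k"] mu by (simp add: add_pos_nonneg)
  have sum: "al + be = 1 + \<mu> * A (Suc k)" unfolding al_def be_def using step_facts(8)[of k] by (simp add: algebra_simps)
  have m: "(al + be) *\<^sub>R x (Suc k) = al *\<^sub>R x k + be *\<^sub>R y (Suc k) - a (Suc k) *\<^sub>R v (Suc k)"
    unfolding sum step_facts(9)[of k] using Apos
    by (simp add: al_def be_def scaleR_add_right scaleR_diff_right)
  have "E z = E (x (Suc k)) + (al + be)/2 * (norm (z - x (Suc k)))\<^sup>2"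
    unfolding E_def using quad_ident[OF m, of z] by simp
  then show ?case using F[of z] F[of "x (Suc k)"] sum by simp
qed

end


context alg2 begin

lemma P2_step:
  assumes pre: "A k * gam k (y k) + S k \<le> psi k (x k)"
  shows "A (Suc k) * H (Suc k) + S (Suc k) \<le> psi (Suc k) (x (Suc k))"
proof -
  let ?A = "A k" and ?a = "a (Suc k)" and ?A' = "A (Suc k)" and ?l = "lam (Suc k)"
  have hA': "?A' = ?A + ?a" using step_facts(8) .
  have hxt: "xt k = ((?a - \<mu>*?A*?l)/?A') *\<^sub>R x k + ((?A + \<mu>*?A*?l)/?A') *\<^sub>R y k"
    using step_facts(3)[of k] hA' by simp
  have ha: "?a \<ge> \<mu>*?A*?l"
  proof -
    have "\<mu>*?A*?l \<le> (1 + 2*\<mu>*?A) * ?l" using A_nonneg[of k] mu step_facts(1)[of k]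
      by (simp add: algebra_simps mult_nonneg_nonneg)
    then show ?thesis using a_ge[of k] by linarith
  qed
  have c: "?A*(inner (v (Suc k)) (y k - y (Suc k)) - eps (Suc k) + \<mu>/2*(norm(y k - y (Suc k)))\<^sup>2)
       + ?a*(inner (v (Suc k)) (x (Suc k) - y (Suc k)) - eps (Suc k) + \<mu>/2*(norm(x (Suc k) - y (Suc k)))\<^sup>2)
       + (1+\<mu>*?A)/2*(norm(x (Suc k) - x k))\<^sup>2 \<ge> ?A'*(1-\<sigma>\<^sup>2)/(2*?l)*(norm(y (Suc k) - xt k))\<^sup>2"
    by (rule core[OF A_nonneg a_pos step_facts(1) mu a_sq hA' hxt step_facts(9) step_facts(6) ha])
  have ps: "psi (Suc k) (x (Suc k)) = psi k (x k) + (1 + \<mu> * ?A)/2 * (norm (x (Suc k) - x k))\<^sup>2 + ?a * gam k (x (Suc k))"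
    using psi_quad[of k "x (Suc k)"] by (simp add: psi_def)
  have Ss: "S (Suc k) = S k + ?A'*(1-\<sigma>\<^sup>2)/(2*?l)*(norm(y (Suc k) - xt k))\<^sup>2" by (simp add: S_def)
  have "A k * gam k (y k) + ?a * gam k (x (Suc k)) = ?A' * H (Suc k) +
        (?A*(inner (v (Suc k)) (y k - y (Suc k)) - eps (Suc k) + \<mu>/2*(norm(y k - y (Suc k)))\<^sup>2)
       + ?a*(inner (v (Suc k)) (x (Suc k) - y (Suc k)) - eps (Suc k) + \<mu>/2*(norm(x (Suc k) - y (Suc k)))\<^sup>2))"
    unfolding gam_def hA' by (simp add: algebra_simps)
  then show ?thesis using pre c ps Ss by linarith
qed

lemma P2: "A (Suc k) * H (Suc k) + S (Suc k) \<le> psi (Suc k) (x (Suc k))"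
proof (induction k)
  case 0
  show ?case by (rule P2_step) (simp add: basic(5) S_def psi_def)
next
  case (Suc j)
  have "A (Suc j) * gam (Suc j) (y (Suc j)) \<le> A (Suc j) * H (Suc j)"
    using gam_le_H A_nonneg by (simp add: mult_left_mono)
  then show ?case using Suc.IH by (intro P2_step) linarith
qed

lemma psi_xs: "psi k xs \<le> 1/2 * (norm (x 0 - xs))\<^sup>2 + A k * hs"
proof -
  have "(\<Sum>j<k. a (Suc j) * gam j xs) \<le> (\<Sum>j<k. a (Suc j) * hs)"
    using gam_le_hs a_pos by (intro sum_mono mult_left_mono) (auto simp: less_imp_le)
  also have "\<dots> = A k * hs" by (simp add: A_sum sum_distrib_right)
  finally show ?thesis unfolding psi_def by (simp add: norm_minus_commute)
qed

lemma KEY: "A (Suc k) * (H (Suc k) - hs) + (1 + \<mu> * A (Suc k))/2 * (norm (xs - x (Suc k)))\<^sup>2 + S (Suc k)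
   \<le> (norm (x 0 - xs))\<^sup>2 / 2"
proof -
  have "A (Suc k) * (H (Suc k) - hs) = A (Suc k) * H (Suc k) - A (Suc k) * hs" by (simp add: algebra_simps)
  then show ?thesis using P2[of k] psi_xs[of "Suc k"] psi_quad[of "Suc k" xs] by linarith
qed

lemma S_nonneg_terms: "0 \<le> A (Suc j) * (1 - \<sigma>\<^sup>2) / (2 * lam (Suc j)) * (norm (y (Suc j) - xt j))\<^sup>2"
proof -
  have "\<sigma>\<^sup>2 \<le> 1" using basic(1,2) by (simp add: power_le_one)
  then show ?thesis using A_nonneg[of "Suc j"] step_facts(1)[of j] by simp
qed

lemma S_nonneg: "S k \<ge> 0" unfolding S_def by (intro sum_nonneg S_nonneg_terms)

end


lemma aux1: "(c::real) \<noteq> 0 \<Longrightarrow> c * (b/c) = b" by simp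
lemma aux2: "-(a/2) * (2/b) = -(a/(b::real))" by simp

lemma pw1:
  fixes lm th r p :: real
  assumes lm: "lm > 0" and th: "th > 0" and r: "r \<ge> 0" and p: "p \<ge> 2"
    and ls: "lm * r powr (p-1) \<ge> th"
  shows "r\<^sup>2 / lm \<ge> th powr (2/(p-1)) * lm powr (-((p+1)/(p-1)))"
proof -
  have rpos: "r > 0"
  proof (rule ccontr)
    assume "\<not> r > 0" then have "r = 0" using r by simp
    then show False using ls th p by simp
  qed
  have "r powr (p-1) \<ge> th/lm" using ls lm by (simp add: divide_le_eq mult.commute)
  then have "(th/lm) powr (2/(p-1)) \<le> (r powr (p-1)) powr (2/(p-1))"
    using th lm p by (intro powr_mono2) auto
  also have "\<dots> = r powr ((p-1)*(2/(p-1)))" by (simp add: powr_powr)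
  also have "(p-1)*(2/(p-1)) = 2"
  proof -
    have "p - 1 \<noteq> 0" using p by simp
    then show ?thesis by (rule aux1)
  qed
  also have "r powr 2 = r\<^sup>2" using rpos by (simp add: powr_numeral)
  finally have h: "th powr (2/(p-1)) / lm powr (2/(p-1)) \<le> r\<^sup>2" using th lm by (simp add: powr_divide)
  have e: "lm powr (2/(p-1)) * lm = lm powr ((p+1)/(p-1))"
  proof -
    have "lm powr (2/(p-1)) * lm = lm powr (2/(p-1)) * lm powr 1" using lm by simp
    also have "\<dots> = lm powr (2/(p-1) + 1)" by (simp add: powr_add)
    also have "2/(p-1) + 1 = (p+1)/(p-1)" using p by (simp add: field_simps)
    finally show ?thesis .
  qed
  have "th powr (2/(p-1)) * lm powr (-((p+1)/(p-1))) = th powr (2/(p-1)) / (lm powr (2/(p-1)) * lm)"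
    unfolding e using lm by (simp add: powr_minus divide_inverse)
  also have "\<dots> \<le> r\<^sup>2 / lm" using h lm by (simp add: divide_le_eq field_simps)
  finally show ?thesis .
qed

lemma pw3:
  fixes lm th r p K :: real
  assumes lm: "lm > 0" and th: "th > 0" and r: "r \<ge> 0" and p: "p \<ge> 2" and K: "K > 0"
    and rK: "r\<^sup>2 \<le> lm * K" and ls: "lm * r powr (p-1) \<ge> th"
  shows "lm \<ge> th powr (2/(p+1)) * K powr (-((p-1)/(p+1)))"
proof -
  have "r = (r\<^sup>2) powr (1/2)" using r by (simp add: powr_half_sqrt)
  then have "r powr (p-1) = (r\<^sup>2) powr ((p-1)/2)" by (metis powr_powr times_divide_eq_left mult_1)
  also have "\<dots> \<le> (lm * K) powr ((p-1)/2)" using rK p by (intro powr_mono2) auto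
  also have "\<dots> = lm powr ((p-1)/2) * K powr ((p-1)/2)" using lm K by (simp add: powr_mult)
  finally have "th \<le> lm * (lm powr ((p-1)/2) * K powr ((p-1)/2))"
    using ls lm by (meson mult_left_mono less_imp_le order_trans)
  also have "lm * (lm powr ((p-1)/2) * K powr ((p-1)/2)) = lm powr ((p+1)/2) * K powr ((p-1)/2)"
  proof -
    have "lm * lm powr ((p-1)/2) = lm powr (1 + (p-1)/2)" using lm by (simp add: powr_add)
    also have "1 + (p-1)/2 = (p+1)/2" by (simp add: field_simps)
    finally have "lm * lm powr ((p-1)/2) = lm powr ((p+1)/2)" .
    then show ?thesis by (metis mult.assoc)
  qed
  finally have t1: "th \<le> lm powr ((p+1)/2) * K powr ((p-1)/2)" .
  have kk: "K powr ((p-1)/2) * K powr (-((p-1)/2)) = 1" using K by (simp add: powr_add[symmetric])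
  have "th * K powr (-((p-1)/2)) \<le> (lm powr ((p+1)/2) * K powr ((p-1)/2)) * K powr (-((p-1)/2))"
    using t1 by (rule mult_right_mono) simp
  also have "\<dots> = lm powr ((p+1)/2)" using kk by (simp add: mult.assoc)
  finally have h: "th * K powr (-((p-1)/2)) \<le> lm powr ((p+1)/2)" .
  have "(th * K powr (-((p-1)/2))) powr (2/(p+1)) \<le> (lm powr ((p+1)/2)) powr (2/(p+1))"
    using h th K p by (intro powr_mono2) auto
  also have "\<dots> = lm powr ((p+1)/2 * (2/(p+1)))" by (simp only: powr_powr)
  also have "(p+1)/2 * (2/(p+1)) = 1"
  proof -
    have "p + 1 \<noteq> 0" using p by simp
    then show ?thesis by simp
  qed
  also have "lm powr 1 = lm" using lm by simp
  also have "(th * K powr (-((p-1)/2))) powr (2/(p+1)) = th powr (2/(p+1)) * (K powr (-((p-1)/2))) powr (2/(p+1))"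
    using th K by (intro powr_mult)
  also have "(K powr (-((p-1)/2))) powr (2/(p+1)) = K powr (-((p-1)/2) * (2/(p+1)))" by (rule powr_powr)
  also have "-((p-1)/2) * (2/(p+1)) = -((p-1)/(p+1))" by (rule aux2)
  finally show ?thesis .
qed



lemma alg_e: fixes t d M C P m l Q :: real
  assumes "C \<noteq> 0" "P \<noteq> 0" "m \<noteq> 0" "l \<noteq> 0" "Q \<noteq> 0"
  shows "t * (4*(d/(m*l*Q)))/(2*(C/P)) = 2 * t * (d*P)/(m*C*l*Q)"
  using assms by (simp add: field_simps)
lemma alg_v: fixes Z d C P m l Q :: real
  assumes "C \<noteq> 0" "P \<noteq> 0" "m \<noteq> 0" "l \<noteq> 0" "Q \<noteq> 0"
  shows "(Z/(C/P))\<^sup>2*(4*(d/(m*l*Q))) = 4*Z\<^sup>2*(d*P\<^sup>2)/(m*C\<^sup>2*l*Q)"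
  using assms by (simp add: field_simps power2_eq_square)
lemma alg_div: fixes a b c :: real assumes "c > 0" "c * a \<le> b" shows "a \<le> b / c"
  using assms by (simp add: pos_le_divide_eq mult.commute)


lemma growth_gen:
  fixes lm :: "nat \<Rightarrow> real" and k :: nat
  assumes k: "k \<ge> 1" and lpos: "\<And>j. j < k \<Longrightarrow> lm j > 0" and b: "b > 0" and q: "q > 0" and D: "D > 0"
    and sb: "(\<Sum>j<k. lm j powr (-q)) \<le> D"
  shows "(1 + b * (real k / D) powr (1/q)) ^ k \<le> (\<Prod>j<k. (1 + b * lm j))"
proof -
  have kpos: "real k > 0" using k by simp
  define P where "P = (\<Prod>j<k. lm j)"
  have Ppos: "P > 0" unfolding P_def using lpos by (intro prod_pos) auto
  define G where "G = P powr (1/k)"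
  have Gpos: "G > 0" unfolding G_def using Ppos by simp
  have ne: "{..<k} \<noteq> {}" using k by (simp add: lessThan_empty_iff)
  have am: "(\<Prod>j<k. lm j powr (-q)) powr (1/card {..<k}) \<le> (\<Sum>j<k. lm j powr (-q) / card {..<k})"
    by (rule arith_geom_mean) (use ne in auto)
  have "(\<Prod>j<k. lm j powr (-q)) = P powr (-q)" unfolding P_def by (simp add: prod_powr_distrib)
  then have "(\<Prod>j<k. lm j powr (-q)) powr (1/k) = G powr (-q)"
    unfolding G_def by (simp add: powr_powr mult.commute)
  moreover have "(\<Sum>j<k. lm j powr (-q) / card {..<k}) = (\<Sum>j<k. lm j powr (-q)) / k"
    by (simp add: sum_divide_distrib)
  ultimately have "G powr (-q) \<le> (\<Sum>j<k. lm j powr (-q)) / k" using am by simp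
  also have "\<dots> \<le> D / k" using sb kpos by (simp add: divide_right_mono)
  finally have gq: "G powr (-q) \<le> D / k" .
  have "(D/k) powr (-(1/q)) \<le> (G powr (-q)) powr (-(1/q))"
    using gq q Gpos by (intro powr_mono2') auto
  also have "(G powr (-q)) powr (-(1/q)) = G" using q Gpos by (simp add: powr_powr)
  also have "(D/k) powr (-(1/q)) = (real k/D) powr (1/q)"
    by (simp add: powr_minus_divide powr_divide)
  finally have Gge: "(real k/D) powr (1/q) \<le> G" .
  have sa: "(1 + (\<Prod>j<k. b * lm j) powr (1/card {..<k})) ^ card {..<k} \<le> (\<Prod>j<k. (1 + b * lm j))"
    by (rule superadd) (use ne b lpos in \<open>auto intro: less_imp_le\<close>)
  have "(\<Prod>j<k. b * lm j) = b ^ k * P" unfolding P_def by (simp add: prod.distrib)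
  then have "(\<Prod>j<k. b * lm j) powr (1/k) = (b ^ k) powr (1/k) * G"
    unfolding G_def using b Ppos by (simp add: powr_mult)
  also have "(b ^ k) powr (1/k) = b"
  proof -
    have "(b ^ k) powr (1/k) = (b powr real k) powr (1/k)" using b by (simp add: powr_realpow)
    also have "\<dots> = b powr (real k * (1/k))" by (rule powr_powr)
    also have "real k * (1/k) = 1" using kpos by simp
    finally show ?thesis using b by simp
  qed
  finally have e: "(\<Prod>j<k. b * lm j) powr (1/k) = b * G" .
  have "(1 + b * (real k / D) powr (1/q)) ^ k \<le> (1 + b * G) ^ k"
    using Gge b by (intro power_mono) (auto intro: add_nonneg_nonneg)
  also have "\<dots> \<le> (\<Prod>j<k. (1 + b * lm j))" using sa e by simp
  finally show ?thesis .
qed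



lemma aux3: "(c::real) \<noteq> 0 \<Longrightarrow> a/c*(c/b) = a/b" by simp

lemma const_id:
  fixes l1 w th d p kk :: real
  assumes l1: "l1 > 0" and w: "w > 0" and th: "th > 0" and d: "d > 0" and p: "p \<ge> 2" and kk: "kk \<ge> 0"
  shows "(kk / (d\<^sup>2/(l1*w*th powr (2/(p-1))))) powr ((p-1)/(p+1))
       = (l1 powr ((p-1)/(p+1)) * th powr (2/(p+1)) * w powr ((p-1)/(p+1))) / d powr (2*(p-1)/(p+1)) * kk powr ((p-1)/(p+1))"
proof -
  define s where "s = (p-1)/(p+1)"
  have "kk / (d\<^sup>2/(l1*w*th powr (2/(p-1)))) = (kk * l1 * w * th powr (2/(p-1))) / d\<^sup>2"
    by (simp add: field_simps)
  then have "(kk / (d\<^sup>2/(l1*w*th powr (2/(p-1))))) powr s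
      = (kk powr s * l1 powr s * w powr s * (th powr (2/(p-1))) powr s) / (d\<^sup>2) powr s"
    using kk l1 w by (simp add: powr_divide powr_mult)
  also have "(th powr (2/(p-1))) powr s = th powr (2/(p+1))"
  proof -
    have "(th powr (2/(p-1))) powr s = th powr (2/(p-1) * s)" by (rule powr_powr)
    also have "2/(p-1) * s = 2/(p+1)"
    proof -
      have "p - 1 \<noteq> 0" using p by auto
      then show ?thesis unfolding s_def by (rule aux3)
    qed
    finally show ?thesis .
  qed
  also have "(d\<^sup>2) powr s = d powr (2*(p-1)/(p+1))"
  proof -
    have "(d\<^sup>2) powr s = (d powr 2) powr s" using d by (simp add: powr_numeral)
    also have "\<dots> = d powr (2 * s)" by (rule powr_powr)
    finally show ?thesis unfolding s_def by simp
  qed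
  finally show ?thesis unfolding s_def by (simp add: field_simps)
qed

lemma L_id:
  fixes l1 w th d p :: real
  assumes l1: "l1 > 0" and w: "w > 0" and th: "th > 0" and d: "d > 0" and p: "p \<ge> 2"
  shows "th powr (2/(p+1)) * (d\<^sup>2/(l1*w)) powr (-((p-1)/(p+1)))
       = (l1 powr ((p-1)/(p+1)) * th powr (2/(p+1)) * w powr ((p-1)/(p+1))) / d powr (2*(p-1)/(p+1))"
proof -
  define s where "s = (p-1)/(p+1)"
  have "(d\<^sup>2/(l1*w)) powr (-s) = 1 / (d\<^sup>2/(l1*w)) powr s" by (simp add: powr_minus_divide)
  also have "(d\<^sup>2/(l1*w)) powr s = (d\<^sup>2) powr s / (l1 powr s * w powr s)"
    using l1 w by (simp add: powr_divide powr_mult)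
  also have "(d\<^sup>2) powr s = d powr (2*(p-1)/(p+1))"
  proof -
    have "(d\<^sup>2) powr s = (d powr 2) powr s" using d by (simp add: powr_numeral)
    also have "\<dots> = d powr (2 * s)" by (rule powr_powr)
    finally show ?thesis unfolding s_def by simp
  qed
  finally show ?thesis unfolding s_def by (simp add: field_simps)
qed

lemma d_exp1:
  fixes d p :: real assumes d: "d > 0" and p: "p \<ge> 2"
  shows "d\<^sup>2 * d powr (2*(p-1)/(p+1)) = d powr (4*p/(p+1))"
proof -
  have "d\<^sup>2 = d powr 2" using d by (simp add: powr_numeral)
  then have "d\<^sup>2 * d powr (2*(p-1)/(p+1)) = d powr (2 + 2*(p-1)/(p+1))" by (simp add: powr_add)
  also have "2 + 2*(p-1)/(p+1) = 4*p/(p+1)"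
  proof -
    have "p + 1 \<noteq> 0" using p by auto
    then show ?thesis by (simp add: field_simps)
  qed
  finally show ?thesis .
qed

lemma d_exp2:
  fixes d p :: real assumes d: "d > 0" and p: "p \<ge> 2"
  shows "d\<^sup>2 * (d powr (2*(p-1)/(p+1)))\<^sup>2 = d powr (2*(3*p-1)/(p+1))"
proof -
  have "d\<^sup>2 = d powr 2" using d by (simp add: powr_numeral)
  moreover have "(d powr (2*(p-1)/(p+1)))\<^sup>2 = d powr (2*(p-1)/(p+1) + 2*(p-1)/(p+1))"
    by (simp only: power2_eq_square powr_add)
  ultimately have "d\<^sup>2 * (d powr (2*(p-1)/(p+1)))\<^sup>2 = d powr (2 + (2*(p-1)/(p+1) + 2*(p-1)/(p+1)))"
    by (simp only: powr_add)
  also have "2 + (2*(p-1)/(p+1) + 2*(p-1)/(p+1)) = 2*(3*p-1)/(p+1)"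
  proof -
    have h: "u \<noteq> 0 \<Longrightarrow> 2 + (2*(p-1)/u + 2*(p-1)/u) = (2*u + 4*(p-1))/u" for u :: real
      by (simp add: field_simps)
    have "p + 1 \<noteq> 0" using p by auto
    from h[OF this] show ?thesis by (simp add: algebra_simps)
  qed
  finally show ?thesis .
qed

lemma vmono:
  fixes lm L sg mu :: real
  assumes L: "L > 0" "L \<le> lm" and sg: "sg \<ge> 0" and mu: "mu \<ge> 0"
  shows "(1 + sg * sqrt (1 + lm * mu)) / lm \<le> (1 + sg * sqrt (1 + L * mu)) / L"
proof -
  have lm: "lm > 0" using L by simp
  have "(1 + lm*mu)/lm\<^sup>2 \<le> (1 + L*mu)/L\<^sup>2"
  proof -
    have "L\<^sup>2 * (1 + lm*mu) \<le> lm\<^sup>2 * (1 + L*mu)"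
    proof -
      have "L\<^sup>2 \<le> lm\<^sup>2" using L by (simp add: power_mono)
      moreover have "L\<^sup>2 * lm * mu \<le> lm\<^sup>2 * L * mu"
      proof -
        have "L * L * lm \<le> lm * lm * L" using L by (simp add: mult_right_mono mult_left_mono mult.commute mult.left_commute)
        then show ?thesis using mu by (simp add: power2_eq_square mult_right_mono)
      qed
      ultimately show ?thesis by (simp add: algebra_simps)
    qed
    then show ?thesis using L lm by (simp add: divide_simps mult.commute)
  qed
  then have "sqrt ((1 + lm*mu)/lm\<^sup>2) \<le> sqrt ((1 + L*mu)/L\<^sup>2)" by simp
  then have s: "sqrt (1 + lm*mu)/lm \<le> sqrt (1 + L*mu)/L" using L lm by (simp add: real_sqrt_divide)
  have "1/lm \<le> 1/L" using L by (simp add: frac_le)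
  moreover have "sg * (sqrt (1 + lm*mu)/lm) \<le> sg * (sqrt (1 + L*mu)/L)" by (rule mult_left_mono[OF s sg])
  ultimately show ?thesis by (simp add: add_divide_distrib)
qed

lemma norm_diff_sq:
  fixes a b :: "'a::real_inner"
  shows "(norm (a - b))\<^sup>2 \<le> 2*(norm a)\<^sup>2 + 2*(norm b)\<^sup>2"
proof -
  have "2*(norm a)\<^sup>2 + 2*(norm b)\<^sup>2 - (norm (a - b))\<^sup>2 = (norm (a + b))\<^sup>2"
    by (simp only: power2_norm_eq_inner) (simp add: inner_simps inner_commute algebra_simps)
  then show ?thesis by (metis diff_ge_0_iff_ge zero_le_power2)
qed



context alg2 begin

lemma A_mono: "A k \<le> A (Suc k)" using step_facts(8)[of k] a_pos[of k] by simp

lemma A_ge1: "A (Suc j) \<ge> lam 1"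
proof (induction j)
  case 0 then show ?case using A1 by simp
next
  case (Suc j) then show ?case using A_mono[of "Suc j"] by linarith
qed

lemma A_prod: "A (Suc k) \<ge> lam 1 * (\<Prod>j<k. (1 + 2*\<mu>*lam (Suc (Suc j))))"
proof (induction k)
  case 0 then show ?case using A1 by simp
next
  case (Suc k)
  have "A (Suc (Suc k)) \<ge> A (Suc k) * (1 + 2*\<mu>*lam (Suc (Suc k)))"
  proof -
    have "a (Suc (Suc k)) \<ge> (1 + 2*\<mu>*A (Suc k)) * lam (Suc (Suc k))" by (rule a_ge)
    then show ?thesis using step_facts(8)[of "Suc k"] step_facts(1)[of "Suc k"] A_nonneg[of "Suc k"] mu
      by (simp add: algebra_simps)
  qed
  moreover have "A (Suc k) * (1 + 2*\<mu>*lam (Suc (Suc k))) \<ge> lam 1 * (\<Prod>j<k. (1 + 2*\<mu>*lam (Suc (Suc j)))) * (1 + 2*\<mu>*lam (Suc (Suc k)))"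
    using Suc.IH step_facts(1)[of "Suc k"] mu by (intro mult_right_mono) (auto intro: add_nonneg_nonneg)
  ultimately show ?case by (simp add: mult.assoc)
qed

lemma S_le: "S (Suc k) \<le> (norm (x 0 - xs))\<^sup>2 / 2"
proof -
  have "A (Suc k) * (H (Suc k) - hs) \<ge> 0" using A_nonneg H_ge by simp
  moreover have "(1 + \<mu> * A (Suc k))/2 * (norm (xs - x (Suc k)))\<^sup>2 \<ge> 0"
    using A_nonneg[of "Suc k"] mu by (simp add: add_nonneg_nonneg)
  ultimately show ?thesis using KEY[of k] by linarith
qed

definition tm :: "nat \<Rightarrow> real" where
  "tm j = A (Suc j) * (1 - \<sigma>\<^sup>2) / (2 * lam (Suc j)) * (norm (y (Suc j) - xt j))\<^sup>2"

lemma sig2: "1 - \<sigma>\<^sup>2 > 0"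
proof -
  have "\<sigma>\<^sup>2 < 1" using basic(1,2) by (simp add: power_less_one_iff abs_less_iff)
  then show ?thesis by simp
qed

lemma tm_le_S: "tm k \<le> S (Suc k)"
proof -
  have "tm k \<le> (\<Sum>j<Suc k. tm j)" using S_nonneg_terms unfolding tm_def by (intro member_le_sum) auto
  then show ?thesis by (simp add: S_def tm_def)
qed

lemma tm_lower: "lam 1 * (1 - \<sigma>\<^sup>2) / 2 * (\<theta> powr (2/(p-1)) * lam (Suc j) powr (-((p+1)/(p-1)))) \<le> tm j"
proof -
  have pw: "\<theta> powr (2/(p-1)) * lam (Suc j) powr (-((p+1)/(p-1))) \<le> (norm (y (Suc j) - xt j))\<^sup>2 / lam (Suc j)"
    by (rule pw1[OF step_facts(1) basic(4) norm_ge_zero basic(3) step_facts(7)])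
  have "lam 1 * (1 - \<sigma>\<^sup>2) / 2 \<le> A (Suc j) * (1 - \<sigma>\<^sup>2) / 2" using A_ge1[of j] sig2 by (simp add: divide_right_mono)
  then have "lam 1 * (1 - \<sigma>\<^sup>2) / 2 * (\<theta> powr (2/(p-1)) * lam (Suc j) powr (-((p+1)/(p-1))))
     \<le> A (Suc j) * (1 - \<sigma>\<^sup>2) / 2 * ((norm (y (Suc j) - xt j))\<^sup>2 / lam (Suc j))"
    using pw sig2 A_ge1[of j] step_facts(1)[of 0] by (intro mult_mono) auto
  also have "\<dots> = tm j" unfolding tm_def by (simp add: field_simps)
  finally show ?thesis .
qed

lemma sum_bound: "(\<Sum>j<k. lam (Suc (Suc j)) powr (-((p+1)/(p-1))))
    \<le> (norm (x 0 - xs))\<^sup>2 / (lam 1 * (1 - \<sigma>\<^sup>2) * \<theta> powr (2/(p-1)))"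
proof -
  define c0 where "c0 = lam 1 * (1 - \<sigma>\<^sup>2) / 2 * \<theta> powr (2/(p-1))"
  have c0: "c0 > 0" unfolding c0_def using sig2 step_facts(1)[of 0] basic(4) by simp
  have "c0 * (\<Sum>j<k. lam (Suc (Suc j)) powr (-((p+1)/(p-1)))) = (\<Sum>j<k. c0 * lam (Suc (Suc j)) powr (-((p+1)/(p-1))))"
    by (simp add: sum_distrib_left)
  also have "\<dots> \<le> (\<Sum>j<k. tm (Suc j))"
    using tm_lower unfolding c0_def by (intro sum_mono) (simp add: mult.assoc)
  also have "\<dots> \<le> tm 0 + (\<Sum>j<k. tm (Suc j))" using S_nonneg_terms[of 0] unfolding tm_def by simp
  also have "tm 0 + (\<Sum>j<k. tm (Suc j)) = (\<Sum>j<Suc k. tm j)" by (rule sum.lessThan_Suc_shift[symmetric])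
  also have "\<dots> = S (Suc k)" by (simp only: S_def tm_def)
  also have "\<dots> \<le> (norm (x 0 - xs))\<^sup>2 / 2" by (rule S_le)
  finally have "c0 * (\<Sum>j<k. lam (Suc (Suc j)) powr (-((p+1)/(p-1)))) \<le> (norm (x 0 - xs))\<^sup>2 / 2" .
  then have "(\<Sum>j<k. lam (Suc (Suc j)) powr (-((p+1)/(p-1)))) \<le> (norm (x 0 - xs))\<^sup>2 / 2 / c0"
    using c0 by (simp add: le_divide_eq mult.commute)
  also have "(norm (x 0 - xs))\<^sup>2 / 2 / c0 = (norm (x 0 - xs))\<^sup>2 / (lam 1 * (1 - \<sigma>\<^sup>2) * \<theta> powr (2/(p-1)))"
    unfolding c0_def by simp
  finally show ?thesis .
qed

end


locale alg2d = alg2 +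
  fixes d0 C :: real and Q :: "nat \<Rightarrow> real"
  assumes d0pos: "norm (x 0 - xs) > 0"
    and d0_def: "d0 = norm (x 0 - xs)"
    and C_def: "C = lam 1 powr ((p - 1) / (p + 1)) * \<theta> powr (2 / (p + 1))
               * (1 - \<sigma>\<^sup>2) powr ((p - 1) / (p + 1))"
    and Q_def: "Q = (\<lambda>m::nat. (1 + 2 * \<mu> * C / d0 powr (2 * (p - 1) / (p + 1))
               * real m powr ((p - 1) / (p + 1))) ^ m)"
begin

lemma d0p: "d0 > 0" using d0pos d0_def by simp
lemma l1p: "lam 1 > 0" using step_facts(1)[of 0] by simp
lemma Cpos: "C > 0" unfolding C_def using l1p basic(4) sig2 by simp

lemma Q_base: "1 \<le> 1 + 2 * \<mu> * C / d0 powr (2 * (p - 1) / (p + 1)) * real m powr ((p - 1) / (p + 1))"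
  using mu Cpos d0p by simp

lemma Q_ge1: "Q m \<ge> 1" unfolding Q_def using Q_base by simp
lemma Q_pos: "Q m > 0" using Q_ge1[of m] by simp

lemma Q_mono: "Q m \<le> Q (Suc m)"
proof -
  define b where "b = (\<lambda>m::nat. 1 + 2 * \<mu> * C / d0 powr (2 * (p - 1) / (p + 1)) * real m powr ((p - 1) / (p + 1)))"
  have bm: "b m \<le> b (Suc m)" unfolding b_def using mu Cpos d0p basic(3)
    by (intro add_left_mono mult_left_mono powr_mono2) auto
  have b1: "b m \<ge> 1" unfolding b_def using Q_base .
  have "b m ^ m \<le> b (Suc m) ^ m" using bm b1 by (intro power_mono) auto
  also have "\<dots> \<le> b (Suc m) ^ Suc m" using bm b1 by (intro power_increasing) auto
  finally show ?thesis unfolding Q_def b_def by simp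
qed

lemma growth: "A (Suc k) \<ge> lam 1 * Q k"
proof (cases "k = 0")
  case True then show ?thesis using A1 by (simp add: Q_def)
next
  case False
  then have k: "k \<ge> 1" by simp
  define D where "D = d0\<^sup>2 / (lam 1 * (1 - \<sigma>\<^sup>2) * \<theta> powr (2/(p-1)))"
  have Dpos: "D > 0" unfolding D_def using d0p l1p sig2 basic(4) by simp
  have q: "(p+1)/(p-1) > 0" using basic(3) by simp
  have gg: "(1 + (2*\<mu>) * (real k / D) powr (1/((p+1)/(p-1)))) ^ k \<le> (\<Prod>j<k. (1 + (2*\<mu>) * lam (Suc (Suc j))))"
    by (rule growth_gen[OF k _ _ q Dpos]) (use step_facts(1) mu sum_bound[of k] in \<open>auto simp: D_def d0_def\<close>)
  have "(real k / D) powr (1/((p+1)/(p-1))) = (real k / D) powr ((p-1)/(p+1))" by simp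
  also have "\<dots> = C / d0 powr (2*(p-1)/(p+1)) * real k powr ((p-1)/(p+1))"
    unfolding D_def C_def by (rule const_id[OF l1p sig2 basic(4) d0p basic(3)]) simp
  finally have "Q k \<le> (\<Prod>j<k. (1 + 2*\<mu> * lam (Suc (Suc j))))"
    using gg unfolding Q_def by (simp add: mult.assoc)
  then have "lam 1 * Q k \<le> lam 1 * (\<Prod>j<k. (1 + 2*\<mu> * lam (Suc (Suc j))))"
    using l1p by simp
  also have "\<dots> \<le> A (Suc k)" by (rule A_prod)
  finally show ?thesis .
qed

lemma Apos: "A (Suc k) > 0" using growth[of k] l1p Q_pos[of k] by (smt (verit) mult_pos_pos)

lemma part_a1: "H (Suc k) - hs \<le> d0\<^sup>2 / (2 * lam 1 * Q k)"
proof -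
  have "A (Suc k) * (H (Suc k) - hs) \<le> d0\<^sup>2 / 2"
    using KEY[of k] S_nonneg[of "Suc k"] A_nonneg[of "Suc k"] mu d0_def
    by (smt (verit) mult_nonneg_nonneg zero_le_power2 divide_nonneg_pos)
  then have "H (Suc k) - hs \<le> d0\<^sup>2 / 2 / A (Suc k)" using Apos[of k] by (simp add: le_divide_eq mult.commute)
  also have "\<dots> \<le> d0\<^sup>2 / 2 / (lam 1 * Q k)"
    using growth[of k] l1p Q_pos[of k] Apos[of k] by (intro divide_left_mono) auto
  finally show ?thesis by simp
qed

lemma part_a2: "(norm (xs - x (Suc k)))\<^sup>2 \<le> d0\<^sup>2 / (\<mu> * lam 1 * Q k)"
proof -
  have "(1 + \<mu> * A (Suc k))/2 * (norm (xs - x (Suc k)))\<^sup>2 \<le> d0\<^sup>2 / 2"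
    using KEY[of k] S_nonneg[of "Suc k"] A_nonneg[of "Suc k"] H_ge[of k] d0_def
    by (smt (verit) mult_nonneg_nonneg)
  then have "(1 + \<mu> * A (Suc k)) * (norm (xs - x (Suc k)))\<^sup>2 \<le> d0\<^sup>2" by simp
  moreover have "\<mu> * (lam 1 * Q k) \<le> 1 + \<mu> * A (Suc k)" using growth[of k] mu
    by (smt (verit) mult_left_mono)
  moreover have mp: "\<mu> * (lam 1 * Q k) > 0" using mu l1p Q_pos[of k] by simp
  ultimately have "\<mu> * (lam 1 * Q k) * (norm (xs - x (Suc k)))\<^sup>2 \<le> d0\<^sup>2"
    by (smt (verit) mult_right_mono zero_le_power2)
  then have "(norm (xs - x (Suc k)))\<^sup>2 \<le> d0\<^sup>2 / (\<mu> * (lam 1 * Q k))"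
    using pos_le_divide_eq[OF mp] by (metis mult.commute)
  then show ?thesis by (simp add: mult.assoc)
qed

lemma part_a3: "(norm (xs - y (Suc k)))\<^sup>2 \<le> d0\<^sup>2 / (\<mu> * lam 1 * Q k)"
proof -
  have fy: "f (y (Suc k)) = ereal (real_of_ereal (f (y (Suc k))))"
   and gy: "g (y (Suc k)) = ereal (real_of_ereal (g (y (Suc k))))"
    using hy[of k] by (cases "f (y (Suc k))"; cases "g (y (Suc k))"; simp)+
  have "\<mu>/2 * (norm (y (Suc k) - xs))\<^sup>2 \<le> H (Suc k) - hs"
    using h_strong[OF pf pg cf sc _ fy gy xs_fin(1) xs_fin(2) mn] mu unfolding H_def hs_def by simp
  also have "\<dots> \<le> d0\<^sup>2 / (2 * lam 1 * Q k)" by (rule part_a1)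
  finally have "\<mu> * (norm (xs - y (Suc k)))\<^sup>2 \<le> d0\<^sup>2 / (lam 1 * Q k)"
    by (simp add: norm_minus_commute field_simps)
  then have "(norm (xs - y (Suc k)))\<^sup>2 \<le> d0\<^sup>2 / (lam 1 * Q k) / \<mu>"
    using pos_le_divide_eq[OF mu] by (metis mult.commute)
  moreover have "d0\<^sup>2 / (lam 1 * Q k) / \<mu> = d0\<^sup>2 / (\<mu> * lam 1 * Q k)"
    by (simp only: divide_divide_eq_left) (simp add: ac_simps)
  ultimately show ?thesis by (simp only:)
qed

end


context alg2d begin

definition L :: real where "L = C / d0 powr (2 * (p - 1) / (p + 1))"

lemma Lpos: "L > 0" unfolding L_def using Cpos d0p by simp

lemma lam_lower: "lam (Suc k) \<ge> L"
proof -
  define r where "r = norm (y (Suc k) - xt k)"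
  define K where "K = d0\<^sup>2 / (lam 1 * (1 - \<sigma>\<^sup>2))"
  have Kpos: "K > 0" unfolding K_def using d0p l1p sig2 by simp
  have lk: "lam (Suc k) > 0" by (rule step_facts(1))
  have "tm k \<le> d0\<^sup>2 / 2" using tm_le_S[of k] S_le[of k] d0_def by simp
  then have "A (Suc k) * (1 - \<sigma>\<^sup>2) / (2 * lam (Suc k)) * r\<^sup>2 \<le> d0\<^sup>2 / 2" unfolding tm_def r_def .
  then have "A (Suc k) * (1 - \<sigma>\<^sup>2) * r\<^sup>2 \<le> lam (Suc k) * d0\<^sup>2" using lk by (simp add: field_simps)
  moreover have "lam 1 * (1 - \<sigma>\<^sup>2) * r\<^sup>2 \<le> A (Suc k) * (1 - \<sigma>\<^sup>2) * r\<^sup>2"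
    using A_ge1[of k] sig2 by (intro mult_right_mono) auto
  ultimately have "(lam 1 * (1 - \<sigma>\<^sup>2)) * r\<^sup>2 \<le> lam (Suc k) * d0\<^sup>2" by linarith
  then have rK: "r\<^sup>2 \<le> lam (Suc k) * K" unfolding K_def using l1p sig2
    by (simp add: field_simps)
  have "lam (Suc k) \<ge> \<theta> powr (2/(p+1)) * K powr (-((p-1)/(p+1)))"
    by (rule pw3[OF lk basic(4) _ basic(3) Kpos rK]) (use step_facts(7)[of k] in \<open>simp_all add: r_def\<close>)
  also have "\<theta> powr (2/(p+1)) * K powr (-((p-1)/(p+1))) = L"
    unfolding K_def L_def unfolding C_def by (rule L_id[OF l1p sig2 basic(4) d0p basic(3)])
  finally show ?thesis .
qed

lemma xt_bound: "(norm (xt (Suc m) - xs))\<^sup>2 \<le> d0\<^sup>2 / (\<mu> * lam 1 * Q m)"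
proof -
  let ?A = "A (Suc m)" and ?a = "a (Suc (Suc m))" and ?l = "lam (Suc (Suc m))"
  define c1 where "c1 = (?a - \<mu> * ?A * ?l) / (?A + ?a)"
  define c2 where "c2 = (?A + \<mu> * ?A * ?l) / (?A + ?a)"
  have Ap: "?A + ?a > 0" using A_nonneg[of "Suc m"] a_pos[of "Suc m"] by simp
  have c12: "c1 + c2 = 1" unfolding c1_def c2_def add_divide_distrib[symmetric] using Ap by simp
  have ha: "?a \<ge> \<mu> * ?A * ?l"
  proof -
    have "\<mu>*?A*?l \<le> (1 + 2*\<mu>*?A) * ?l" using A_nonneg[of "Suc m"] mu step_facts(1)[of "Suc m"]
      by (simp add: algebra_simps mult_nonneg_nonneg)
    then show ?thesis using a_ge[of "Suc m"] by linarith
  qed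
  have c1p: "c1 \<ge> 0" unfolding c1_def using ha Ap by simp
  have c2p: "c2 \<ge> 0" unfolding c2_def using Ap A_nonneg[of "Suc m"] mu step_facts(1)[of "Suc m"] by simp
  have e: "xt (Suc m) - xs = c1 *\<^sub>R (x (Suc m) - xs) + c2 *\<^sub>R (y (Suc m) - xs)"
  proof -
    have "xt (Suc m) = c1 *\<^sub>R x (Suc m) + c2 *\<^sub>R y (Suc m)" unfolding c1_def c2_def by (rule step_facts(3))
    moreover have "xs = c1 *\<^sub>R xs + c2 *\<^sub>R xs" using c12 by (metis scaleR_add_left scaleR_one)
    ultimately show ?thesis by (simp add: algebra_simps)
  qed
  define B where "B = d0\<^sup>2 / (\<mu> * lam 1 * Q m)"
  have b1: "(norm (x (Suc m) - xs))\<^sup>2 \<le> B" using part_a2[of m] by (simp add: B_def norm_minus_commute)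
  have b2: "(norm (y (Suc m) - xs))\<^sup>2 \<le> B" using part_a3[of m] by (simp add: B_def norm_minus_commute)
  have "(norm (xt (Suc m) - xs))\<^sup>2 \<le> (c1 + c2) * (c1 * (norm (x (Suc m) - xs))\<^sup>2 + c2 * (norm (y (Suc m) - xs))\<^sup>2)"
    unfolding e by (rule jensen2[OF c1p c2p])
  also have "\<dots> \<le> 1 * (c1 * B + c2 * B)" unfolding c12
    using b1 b2 c1p c2p by (intro mult_left_mono add_mono) auto
  also have "\<dots> = B" using c12 by (metis distrib_right mult_1 mult_1_left)
  finally show ?thesis unfolding B_def .
qed

lemma r_bound: "(norm (y (Suc (Suc m)) - xt (Suc m)))\<^sup>2 \<le> 4 * (d0\<^sup>2 / (\<mu> * lam 1 * Q m))"
proof -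
  define B where "B = d0\<^sup>2 / (\<mu> * lam 1 * Q m)"
  have b1: "(norm (y (Suc (Suc m)) - xs))\<^sup>2 \<le> B"
  proof -
    have "(norm (y (Suc (Suc m)) - xs))\<^sup>2 \<le> d0\<^sup>2 / (\<mu> * lam 1 * Q (Suc m))"
      using part_a3[of "Suc m"] by (simp add: norm_minus_commute)
    also have "\<dots> \<le> B" unfolding B_def using Q_mono[of m] Q_pos[of m] mu l1p
      by (intro divide_left_mono mult_left_mono) auto
    finally show ?thesis .
  qed
  have "(norm (y (Suc (Suc m)) - xt (Suc m)))\<^sup>2 = (norm ((y (Suc (Suc m)) - xs) - (xt (Suc m) - xs)))\<^sup>2"
    by (simp add: algebra_simps)
  also have "\<dots> \<le> 2 * (norm (y (Suc (Suc m)) - xs))\<^sup>2 + 2 * (norm (xt (Suc m) - xs))\<^sup>2" by (rule norm_diff_sq)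
  also have "\<dots> \<le> 4 * B" using b1 xt_bound[of m] unfolding B_def by simp
  finally show ?thesis unfolding B_def .
qed

end


context alg2d begin

lemma eps_bound: "eps (Suc (Suc m)) \<le> 3 * \<sigma>\<^sup>2 * d0 powr (4 * p / (p + 1)) / (\<mu> * C * lam 1 * Q m)"
proof -
  let ?l = "lam (Suc (Suc m))" and ?e = "eps (Suc (Suc m))"
  define R2 where "R2 = (norm (y (Suc (Suc m)) - xt (Suc m)))\<^sup>2"
  define B where "B = d0\<^sup>2 / (\<mu> * lam 1 * Q m)"
  define P where "P = d0 powr (2 * (p - 1) / (p + 1))"
  have Pp: "P > 0" unfolding P_def using d0p by simp
  have lp: "?l > 0" by (rule step_facts(1))
  have cpos: "1 + ?l * \<mu> > 0" using lp mu by (simp add: add_pos_nonneg)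
  have Ll: "L \<le> ?l" by (rule lam_lower)
  have z: "0 \<le> (norm (?l *\<^sub>R v (Suc (Suc m)) + y (Suc (Suc m)) - xt (Suc m)))\<^sup>2 / (1 + ?l * \<mu>)"
    using cpos by simp
  have c: "2 * ?l * ?e \<le> \<sigma>\<^sup>2 * R2"
    using step_facts(6)[of "Suc m"] z unfolding R2_def by linarith
  have "?e \<le> \<sigma>\<^sup>2 * R2 / (2 * ?l)" using c lp by (intro alg_div) (auto simp: mult.assoc)
  also have "\<dots> \<le> \<sigma>\<^sup>2 * R2 / (2 * L)" using Ll Lpos by (intro divide_left_mono) (auto simp: R2_def)
  also have "\<dots> \<le> \<sigma>\<^sup>2 * (4 * B) / (2 * L)" using r_bound[of m] Lpos unfolding R2_def B_def
    by (intro divide_right_mono mult_left_mono) auto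
  also have "\<dots> = 2 * \<sigma>\<^sup>2 * (d0\<^sup>2 * P) / (\<mu> * C * lam 1 * Q m)"
    unfolding B_def L_def P_def[symmetric] using Pp Cpos mu l1p Q_pos[of m]
    by (intro alg_e) auto
  also have "d0\<^sup>2 * P = d0 powr (4 * p / (p + 1))" unfolding P_def by (rule d_exp1[OF d0p basic(3)])
  also have "2 * \<sigma>\<^sup>2 * d0 powr (4 * p / (p + 1)) / (\<mu> * C * lam 1 * Q m)
      \<le> 3 * \<sigma>\<^sup>2 * d0 powr (4 * p / (p + 1)) / (\<mu> * C * lam 1 * Q m)"
    using mu Cpos l1p Q_pos[of m] by (intro divide_right_mono mult_right_mono) auto
  finally show ?thesis .
qed

end


context alg2d begin

lemma v_bound: "(norm (v (Suc (Suc m))))\<^sup>2 \<le> (1 + \<sigma> * sqrt (1 + \<mu> * C * d0 powr (- 2 * (p - 1) / (p + 1))))\<^sup>2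
                   * (6 * d0 powr (2 * (3 * p - 1) / (p + 1)))
                   / (\<mu> * C\<^sup>2 * lam 1 * Q m)"
proof -
  let ?l = "lam (Suc (Suc m))" and ?v = "v (Suc (Suc m))"
  define r where "r = y (Suc (Suc m)) - xt (Suc m)"
  define B where "B = d0\<^sup>2 / (\<mu> * lam 1 * Q m)"
  define P where "P = d0 powr (2 * (p - 1) / (p + 1))"
  define Z where "Z = 1 + \<sigma> * sqrt (1 + L * \<mu>)"
  define c where "c = 1 + ?l * \<mu>"
  have Pp: "P > 0" unfolding P_def using d0p by simp
  have lp: "?l > 0" by (rule step_facts(1))
  have Ll: "L \<le> ?l" by (rule lam_lower)
  have cpos: "c > 0" unfolding c_def using lp mu by (simp add: add_pos_nonneg)
  have eq6: "?l *\<^sub>R ?v + y (Suc (Suc m)) - xt (Suc m) = ?l *\<^sub>R ?v + r" by (simp add: r_def)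
  have "(norm (?l *\<^sub>R ?v + r))\<^sup>2 / c \<le> \<sigma>\<^sup>2 * (norm r)\<^sup>2"
    using step_facts(6)[of "Suc m"] step_facts(4)[of "Suc m"] lp unfolding eq6 r_def[symmetric] c_def
    by (smt (verit) mult_nonneg_nonneg)
  then have "(norm (?l *\<^sub>R ?v + r))\<^sup>2 \<le> \<sigma>\<^sup>2 * (norm r)\<^sup>2 * c"
    using pos_divide_le_eq[OF cpos] by blast
  also have "\<sigma>\<^sup>2 * (norm r)\<^sup>2 * c = (\<sigma> * sqrt c * norm r)\<^sup>2"
  proof -
    have "(\<sigma> * sqrt c * norm r)\<^sup>2 = \<sigma>\<^sup>2 * (sqrt c)\<^sup>2 * (norm r)\<^sup>2" by (simp only: power_mult_distrib)
    moreover have "(sqrt c)\<^sup>2 = c" using cpos by simp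
    ultimately show ?thesis by (simp only: ac_simps)
  qed
  finally have n0: "(norm (?l *\<^sub>R ?v + r))\<^sup>2 \<le> (\<sigma> * sqrt c * norm r)\<^sup>2" .
  have nn: "0 \<le> \<sigma> * sqrt c * norm r" using basic(1) cpos by (intro mult_nonneg_nonneg) auto
  have n1: "norm (?l *\<^sub>R ?v + r) \<le> \<sigma> * sqrt c * norm r" by (rule power2_le_imp_le[OF n0 nn])
  have "?l * norm ?v = norm (?l *\<^sub>R ?v)" using lp by simp
  also have "\<dots> = norm ((?l *\<^sub>R ?v + r) - r)" by simp
  also have "\<dots> \<le> norm (?l *\<^sub>R ?v + r) + norm r" by (rule norm_triangle_ineq4)
  also have "\<dots> \<le> (1 + \<sigma> * sqrt c) * norm r" using n1 by (simp add: algebra_simps)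
  finally have "norm ?v \<le> (1 + \<sigma> * sqrt c) * norm r / ?l" using lp by (intro alg_div) auto
  also have "\<dots> = (1 + \<sigma> * sqrt c) / ?l * norm r" by simp
  also have "\<dots> \<le> Z / L * norm r" unfolding Z_def c_def
    using vmono[OF Lpos Ll basic(1) less_imp_le[OF mu]] by (intro mult_right_mono) auto
  finally have nv: "norm ?v \<le> Z / L * norm r" .
  have "(norm ?v)\<^sup>2 \<le> (Z / L * norm r)\<^sup>2" using nv by (intro power_mono) auto
  also have "\<dots> = (Z/L)\<^sup>2 * (norm r)\<^sup>2" by (simp only: power_mult_distrib)
  also have "\<dots> \<le> (Z/L)\<^sup>2 * (4 * B)" using r_bound[of m] unfolding r_def B_def by (intro mult_left_mono) auto
  also have "\<dots> = 4 * Z\<^sup>2 * (d0\<^sup>2 * P\<^sup>2) / (\<mu> * C\<^sup>2 * lam 1 * Q m)"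
    unfolding B_def L_def P_def[symmetric] using Pp Cpos mu l1p Q_pos[of m]
    by (intro alg_v) auto
  also have "d0\<^sup>2 * P\<^sup>2 = d0 powr (2 * (3 * p - 1) / (p + 1))" unfolding P_def by (rule d_exp2[OF d0p basic(3)])
  also have "Z = 1 + \<sigma> * sqrt (1 + \<mu> * C * d0 powr (- 2 * (p - 1) / (p + 1)))"
  proof -
    have ex: "- 2 * (p - 1) / (p + 1) = - (2 * (p - 1) / (p + 1))" by (metis minus_divide_left minus_mult_left)
    have "d0 powr (- 2 * (p - 1) / (p + 1)) = 1 / P" unfolding P_def ex by (rule powr_minus_divide)
    then have h: "\<mu> * C * d0 powr (- 2 * (p - 1) / (p + 1)) = L * \<mu>" unfolding L_def P_def[symmetric] by simp
    show ?thesis by (simp only: Z_def h)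
  qed
  also have "4 * (1 + \<sigma> * sqrt (1 + \<mu> * C * d0 powr (- 2 * (p - 1) / (p + 1))))\<^sup>2 * d0 powr (2 * (3 * p - 1) / (p + 1)) / (\<mu> * C\<^sup>2 * lam 1 * Q m)
     \<le> (1 + \<sigma> * sqrt (1 + \<mu> * C * d0 powr (- 2 * (p - 1) / (p + 1))))\<^sup>2 * (6 * d0 powr (2 * (3 * p - 1) / (p + 1))) / (\<mu> * C\<^sup>2 * lam 1 * Q m)"
    using mu Cpos l1p Q_pos[of m] by (intro divide_right_mono) auto
  finally show ?thesis .
qed

end


theorem theorem3p3:
  fixes f g :: "'a::euclidean_space \<Rightarrow> ereal"
    and \<mu> \<sigma> p \<theta> :: real
    and lam a A eps :: "nat \<Rightarrow> real"
    and x xt y v :: "nat \<Rightarrow> 'a"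
    and xstar :: 'a
    and d0 C :: real and Q :: "nat \<Rightarrow> real"
  assumes f: "proper_fun f" "closed_fun f" "convex_fun f"
    and g: "proper_fun g" "closed_fun g" "convex_fun g"
    and dom: "dom_fun (\<lambda>z. f z + g z) \<noteq> {}"
    and mu: "0 < \<mu>" "strongly_convex_fun \<mu> g"
    and xstar: "\<forall>z. f xstar + g xstar \<le> f z + g z"
    and alg: "algorithm2 f g \<mu> \<sigma> p \<theta> lam a A x xt y v eps"
    and d0pos: "norm (x 0 - xstar) > 0"
    and d0_def: "d0 = norm (x 0 - xstar)"
    and C_def: "C = lam 1 powr ((p - 1) / (p + 1)) * \<theta> powr (2 / (p + 1))
               * (1 - \<sigma>\<^sup>2) powr ((p - 1) / (p + 1))"
    and Q_def: "Q = (\<lambda>m::nat. (1 + 2 * \<mu> * C / d0 powr (2 * (p - 1) / (p + 1))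
               * real m powr ((p - 1) / (p + 1))) ^ m)"
  shows "(\<forall>k. (f (y (Suc k)) + g (y (Suc k))) - (f xstar + g xstar)
                \<le> ereal (d0\<^sup>2 / (2 * lam 1 * Q k))
            \<and> max ((norm (xstar - x (Suc k)))\<^sup>2) ((norm (xstar - y (Suc k)))\<^sup>2)
                \<le> d0\<^sup>2 / (\<mu> * lam 1 * Q k))
       \<and> (\<forall>k\<ge>1. v (Suc k) \<in> set_plus_vec (eps_subdiff (eps (Suc k)) f (y (Suc k)))
                                        (subdiff g (y (Suc k)))
            \<and> (norm (v (Suc k)))\<^sup>2
                \<le> (1 + \<sigma> * sqrt (1 + \<mu> * C * d0 powr (- 2 * (p - 1) / (p + 1))))\<^sup>2
                   * (6 * d0 powr (2 * (3 * p - 1) / (p + 1)))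
                   / (\<mu> * C\<^sup>2 * lam 1 * Q (k - 1))
            \<and> eps (Suc k) \<le> 3 * \<sigma>\<^sup>2 * d0 powr (4 * p / (p + 1)) / (\<mu> * C * lam 1 * Q (k - 1)))"
proof -
  interpret alg2d f g \<mu> \<sigma> p \<theta> lam a A eps x xt y v xstar d0 C Q
    using f g mu xstar alg d0pos d0_def C_def Q_def by unfold_locales auto
  have PA: "(f (y (Suc k)) + g (y (Suc k))) - (f xstar + g xstar)
                \<le> ereal (d0\<^sup>2 / (2 * lam 1 * Q k))
            \<and> max ((norm (xstar - x (Suc k)))\<^sup>2) ((norm (xstar - y (Suc k)))\<^sup>2)
                \<le> d0\<^sup>2 / (\<mu> * lam 1 * Q k)" for k
  proof
    have "(f (y (Suc k)) + g (y (Suc k))) - (f xstar + g xstar) = ereal (H (Suc k) - hs)"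
      using hy[of k] xs_fin(3) by simp
    then show "(f (y (Suc k)) + g (y (Suc k))) - (f xstar + g xstar) \<le> ereal (d0\<^sup>2 / (2 * lam 1 * Q k))"
      using part_a1[of k] by simp
    show "max ((norm (xstar - x (Suc k)))\<^sup>2) ((norm (xstar - y (Suc k)))\<^sup>2) \<le> d0\<^sup>2 / (\<mu> * lam 1 * Q k)"
      using part_a2[of k] part_a3[of k] by simp
  qed
  have PB: "v (Suc k) \<in> set_plus_vec (eps_subdiff (eps (Suc k)) f (y (Suc k)))
                                        (subdiff g (y (Suc k)))
            \<and> (norm (v (Suc k)))\<^sup>2
                \<le> (1 + \<sigma> * sqrt (1 + \<mu> * C * d0 powr (- 2 * (p - 1) / (p + 1))))\<^sup>2
                   * (6 * d0 powr (2 * (3 * p - 1) / (p + 1)))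
                   / (\<mu> * C\<^sup>2 * lam 1 * Q (k - 1))
            \<and> eps (Suc k) \<le> 3 * \<sigma>\<^sup>2 * d0 powr (4 * p / (p + 1)) / (\<mu> * C * lam 1 * Q (k - 1))"
    if k1: "k \<ge> 1" for k
  proof -
    obtain m where km: "k = Suc m" using k1 by (cases k) auto
    show ?thesis unfolding km using step_facts(5)[of "Suc m"] v_bound[of m] eps_bound[of m] by simp
  qed
  show ?thesis using PA PB by blast
qed

end
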